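(* Let $d\ge 2$, $\bm{\mu}\in\mathbb{R}^d$, let $\bm{\Sigma}$ be a positive definite $d\times d$ matrix, $\bm{e}=(1,\dots,1)^\top\in\mathbb{R}^d$, and assume $\bm{\mu}\neq c\,\bm{e}$ for every $c\in\mathbb{R}$. Let $t,\nu\in\mathbb{R}$. Let $\mathcal{M}_S(\bm{\mu},\bm{\Sigma})$ be the set of probability distributions $G$ on $\mathbb{R}^d$ of a random vector $\bm{X}$ with $\mathbb{E}^G[\bm{X}]=\bm{\mu}$, $\mathrm{Cov}^G[\bm{X}]=\bm{\Sigma}$, and $G$ symmetric. Let $\mathcal{W}=\{\bm{w}\in\mathbb{R}^d:\bm{w}^\top\bm{e}=1\}$ and consider the problem \[ \min_{\bm{w}\in\mathcal{W}}\ \sup_{G\in\mathcal{M}_S(\bm{\mu},\bm{\Sigma})}\mathbb{E}^G[(\bm{w}^\top\bm{X}-t)_+^2]\quad\text{s.t.}\quad \bm{w}^\top\bm{\mu}\le\nu. \] Define $u=(\bm{e}^\top\bm{\Sigma}^{-1}\bm{e})(\bm{\mu}^\top\bm{\Sigma}^{-1}\bm{\mu})-(\bm{e}^\top\bm{\Sigma}^{-1}\bm{\mu})^2$, $v_0=\bm{e}^\top\bm{\Sigma}^{-1}\bm{e}/u$, $v_1=\bm{e}^\top\bm{\Sigma}^{-1}\bm{\mu}/u$, $v_2=\bm{\mu}^\top\bm{\Sigma}^{-1}\bm{\mu}/u$. For $a\in\mathbb{R}$, $s>0$ let $h_{S,t}(a,s)=\sup_{F\in\mathcal{L}_S(a,s)}\mathbb{E}^F[(X-t)_+^2]$,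 and set $\phi(\xi)=h_{S,t}\big(\xi,\sqrt{v_0\xi^2-2v_1\xi+v_2}\big)$. Let $\xi_1^*=\min\{v_1/v_0,\,t\}$ and $h^1=\frac12\big(v_0(\xi_1^* )^2-2v_1\xi_1^*+v_2\big)$; when $t<\nu$ let $\xi_2^*=\arg\min_{t\le\xi\le\nu}\phi(\xi)$ and $h^2=\phi(\xi_2^* )$. Then the problem has a unique solution \[ \bm{w}^*_{S,\nu,t}=(\bm{\Sigma}^{-1}\bm{\mu},\ \bm{\Sigma}^{-1}\bm{e})\begin{pmatrix} v_0 & -v_1\\ -v_1 & v_2\end{pmatrix}\begin{pmatrix}\xi^*\\ 1\end{pmatrix}, \] where: (i) if $t\ge\nu$, $\xi^*=\min\{v_1/v_0,\nu\}$; (ii) if $t<\nu$ and $h^1\le h^2$, $\xi^*=\min\{v_1/v_0,t\}$; (iii) if $t<\nu$ and $h^1>h^2$, $\xi^*=\xi_2^*=\arg\min_{t\le\xi\le\nu}\phi(\xi)$.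
   Context: For $x\in\mathbb{R}$, $(x)_+=\max\{x,0\}$. For $a\in\mathbb{R}$ and $s>0$, $\mathcal{L}_S(a,s)$ is the set of symmetric probability distributions $F$ on $\mathbb{R}$ with $\mathbb{E}^F[X]=a$ and $\mathbb{E}^F[X^2]=a^2+s^2$; a distribution of a real random variable $X$ is symmetric if there is $b\in\mathbb{R}$ with $\mathbb{P}(X-b>x)=\mathbb{P}(X-b<-x)$ for all $x$. A distribution $G$ of a random vector $\bm{X}\in\mathbb{R}^d$ is symmetric if there is $\bm{a}\in\mathbb{R}^d$ with $\mathbb{P}(\bm{X}-\bm{a}\in B)=\mathbb{P}(\bm{X}-\bm{a}\in -B)$ for all Borel $B\subseteq\mathbb{R}^d$, where $-B=\{\bm{x}:-\bm{x}\in B\}$. *)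

theory Defs
  imports "HOL-Analysis.Analysis" "HOL-Probability.Probability"
begin

definition pos_def_mat :: "real^'n^'n \<Rightarrow> bool" where
  "pos_def_mat S \<longleftrightarrow> transpose S = S \<and> (\<forall>x. x \<noteq> 0 \<longrightarrow> x \<bullet> (S *v x) > 0)"

definition LS :: "real \<Rightarrow> real \<Rightarrow> real measure set" where
  "LS a s = {F. prob_space F \<and> sets F = sets borel \<and>
      integrable F (\<lambda>x. x) \<and> integrable F (\<lambda>x. x^2) \<and>
      (\<integral>x. x \<partial>F) = a \<and> (\<integral>x. x^2 \<partial>F) = a^2 + s^2 \<and>
      (\<exists>b. \<forall>x. measure F {y. y - b > x} = measure F {y. y - b < - x})}"

definition hS :: "real \<Rightarrow> real \<Rightarrow> real \<Rightarrow> real" where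
  "hS t a s = Sup {(\<integral>x. (max (x - t) 0)^2 \<partial>F) | F. F \<in> LS a s}"

definition MS :: "real^'n \<Rightarrow> real^'n^'n \<Rightarrow> (real^'n) measure set" where
  "MS mu S = {G. prob_space G \<and> sets G = sets borel \<and>
      (\<forall>i. integrable G (\<lambda>x. x$i) \<and> (\<integral>x. x$i \<partial>G) = mu$i) \<and>
      (\<forall>i j. integrable G (\<lambda>x. x$i * x$j) \<and>
             (\<integral>x. x$i * x$j \<partial>G) - mu$i * mu$j = S$i$j) \<and>
      (\<exists>a. \<forall>B \<in> sets borel. measure G {x. x - a \<in> B} = measure G {x. x - a \<in> uminus ` B})}"

definition worst_obj :: "real^'n \<Rightarrow> real^'n^'n \<Rightarrow> real \<Rightarrow> real^'n \<Rightarrow> real" where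
  "worst_obj mu S t w = Sup {(\<integral>x. (max (w \<bullet> x - t) 0)^2 \<partial>G) | G. G \<in> MS mu S}"

definition feasible :: "real^'n \<Rightarrow> real \<Rightarrow> real^'n \<Rightarrow> bool" where
  "feasible mu nu w \<longleftrightarrow> w \<bullet> vec 1 = 1 \<and> w \<bullet> mu \<le> nu"

definition optimal :: "real^'n \<Rightarrow> real^'n^'n \<Rightarrow> real \<Rightarrow> real \<Rightarrow> real^'n \<Rightarrow> bool" where
  "optimal mu S t nu w \<longleftrightarrow> feasible mu nu w \<and>
     (\<forall>w'. feasible mu nu w' \<longrightarrow> worst_obj mu S t w \<le> worst_obj mu S t w')"

definition uq :: "real^'n \<Rightarrow> real^'n^'n \<Rightarrow> real" where
  "uq mu S = (vec 1 \<bullet> (matrix_inv S *v vec 1)) * (mu \<bullet> (matrix_inv S *v mu))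
             - (vec 1 \<bullet> (matrix_inv S *v mu))^2"
definition v0 :: "real^'n \<Rightarrow> real^'n^'n \<Rightarrow> real" where
  "v0 mu S = (vec 1 \<bullet> (matrix_inv S *v vec 1)) / uq mu S"
definition v1 :: "real^'n \<Rightarrow> real^'n^'n \<Rightarrow> real" where
  "v1 mu S = (vec 1 \<bullet> (matrix_inv S *v mu)) / uq mu S"
definition v2 :: "real^'n \<Rightarrow> real^'n^'n \<Rightarrow> real" where
  "v2 mu S = (mu \<bullet> (matrix_inv S *v mu)) / uq mu S"

definition phi :: "real^'n \<Rightarrow> real^'n^'n \<Rightarrow> real \<Rightarrow> real \<Rightarrow> real" where
  "phi mu S t \<xi> = hS t \<xi> (sqrt (v0 mu S * \<xi>^2 - 2 * v1 mu S * \<xi> + v2 mu S))"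

text \<open>(Sigma^{-1} mu, Sigma^{-1} e) [[v0,-v1],[-v1,v2]] (xi,1)^T, multiplied out.\<close>
definition w_of :: "real^'n \<Rightarrow> real^'n^'n \<Rightarrow> real \<Rightarrow> real^'n" where
  "w_of mu S \<xi> = (v0 mu S * \<xi> - v1 mu S) *\<^sub>R (matrix_inv S *v mu)
                 + (- v1 mu S * \<xi> + v2 mu S) *\<^sub>R (matrix_inv S *v vec 1)"

definition h1 :: "real^'n \<Rightarrow> real^'n^'n \<Rightarrow> real \<Rightarrow> real" where
  "h1 mu S t = (let \<xi> = min (v1 mu S / v0 mu S) t in
       (v0 mu S * \<xi>^2 - 2 * v1 mu S * \<xi> + v2 mu S) / 2)"

text \<open>h2 = min of phi over [t,nu] (attainment is part of the theorem).\<close>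
definition h2 :: "real^'n \<Rightarrow> real^'n^'n \<Rightarrow> real \<Rightarrow> real \<Rightarrow> real" where
  "h2 mu S t nu = Inf (phi mu S t ` {t..nu})"

end

theory Submission
  imports Defs
begin


lemma sym_inner:
  fixes A :: "real^'n^'n"
  assumes "transpose A = A"
  shows "x \<bullet> (A *v y) = y \<bullet> (A *v x)"
proof -
  have "x \<bullet> (A *v y) = (x v* A) \<bullet> y" by (simp add: dot_lmul_matrix)
  also have "x v* A = transpose A *v x" by simp
  also have "\<dots> = A *v x" using assms by simp
  finally show ?thesis by (simp add: inner_commute)
qed

locale pf =
  fixes mu :: "real^'n" and S :: "real^'n^'n"
  assumes pd: "pos_def_mat S"
    and nonpar: "\<forall>c::real. mu \<noteq> c *\<^sub>R vec 1"
begin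

abbreviation "Sv \<equiv> matrix_inv S"
abbreviation "e \<equiv> (1 :: real^'n)"

lemma vec1: "vec 1 = (1::real^'n)" by (simp add: vec_eq_iff)

lemma Ssym: "transpose S = S" using pd unfolding pos_def_mat_def by simp

lemma Spos: "x \<noteq> 0 \<Longrightarrow> x \<bullet> (S *v x) > 0" using pd unfolding pos_def_mat_def by simp

lemma Snn: "x \<bullet> (S *v x) \<ge> 0"
  by (cases "x = 0") (auto intro: less_imp_le Spos)

lemma Sinv: "S ** Sv = mat 1 \<and> Sv ** S = mat 1"
proof -
  have "\<forall>x. S *v x = 0 \<longrightarrow> x = 0" using Spos by (metis inner_zero_right less_irrefl)
  then obtain B where "B ** S = mat 1" using matrix_left_invertible_ker by blast
  hence "\<exists>A'. S ** A' = mat 1 \<and> A' ** S = mat 1" using matrix_left_right_inverse by blast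
  thus ?thesis unfolding matrix_inv_def by (rule someI_ex)
qed

lemma S_Si: "S *v (Sv *v x) = x"
  using Sinv by (simp add: matrix_vector_mul_assoc)

lemma Si_S: "Sv *v (S *v x) = x"
  using Sinv by (simp add: matrix_vector_mul_assoc)

lemma Sisym: "transpose Sv = Sv"
proof -
  have "transpose Sv ** S = mat 1"
    by (metis Sinv Ssym matrix_transpose_mul transpose_mat)
  hence "transpose Sv = transpose Sv ** (S ** Sv)" using Sinv by simp
  also have "\<dots> = (transpose Sv ** S) ** Sv" by (simp add: matrix_mul_assoc)
  finally show ?thesis using \<open>transpose Sv ** S = mat 1\<close> by simp
qed

definition q :: "real^'n \<Rightarrow> real^'n \<Rightarrow> real" where "q x y = x \<bullet> (Sv *v y)"

lemma q_sym: "q x y = q y x" unfolding q_def using sym_inner[OF Sisym] by simp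

lemma q_pos: "x \<noteq> 0 \<Longrightarrow> q x x > 0"
proof -
  assume x: "x \<noteq> 0"
  define y where "y = Sv *v x"
  have xy: "x = S *v y" using S_Si y_def by simp
  hence "y \<noteq> 0" using x by auto
  hence "y \<bullet> (S *v y) > 0" by (rule Spos)
  thus ?thesis unfolding q_def y_def[symmetric] using xy by (simp add: inner_commute)
qed

lemma q_lin:
  "q (x + y) z = q x z + q y z" "q (x - y) z = q x z - q y z" "q (c *\<^sub>R x) z = c * q x z"
  "q z (x + y) = q z x + q z y" "q z (x - y) = q z x - q z y" "q z (c *\<^sub>R x) = c * q z x"
  unfolding q_def by (auto simp: algebra_simps matrix_vector_mult_scaleR)

definition "qA = q e e"
definition "qB = q e mu"
definition "qC = q mu mu"

lemma e_nz: "e \<noteq> 0"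
proof
  assume "e = 0"
  hence "e $ undefined = 0 $ undefined" by simp
  thus False by simp
qed

lemma qA_pos: "qA > 0" unfolding qA_def using q_pos e_nz by simp

lemma u_pos: "uq mu S > 0"
proof -
  define l where "l = qB / qA"
  have "mu - l *\<^sub>R e \<noteq> 0" using nonpar by auto
  hence "q (mu - l *\<^sub>R e) (mu - l *\<^sub>R e) > 0" by (rule q_pos)
  moreover have "q mu e = q e mu" by (rule q_sym)
  ultimately have "qC - 2 * l * qB + l^2 * qA > 0"
    by (simp add: q_lin qA_def qB_def qC_def power2_eq_square algebra_simps)
  hence "qC - qB^2 / qA > 0" using qA_pos unfolding l_def
    by (simp add: power2_eq_square field_simps)
  hence "qA * qC - qB^2 > 0" using qA_pos by (simp add: field_simps)
  moreover have "uq mu S = qA * qC - qB^2"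
    unfolding uq_def qA_def qC_def qB_def q_def vec1 by simp
  ultimately show ?thesis by simp
qed

lemma v_defs: "v0 mu S = qA / uq mu S" "v1 mu S = qB / uq mu S" "v2 mu S = qC / uq mu S"
  unfolding v0_def v1_def v2_def qA_def qB_def qC_def q_def vec1 by auto

lemma u_eq: "uq mu S = qA * qC - qB^2"
  unfolding uq_def qA_def qC_def qB_def q_def vec1 by simp

lemma v0_pos: "v0 mu S > 0" using v_defs qA_pos u_pos by simp

lemma vdet: "v0 mu S * v2 mu S - (v1 mu S)^2 = 1 / uq mu S"
proof -
  have "v0 mu S * v2 mu S - (v1 mu S)^2 = (qA * qC - qB^2) / (uq mu S)^2"
    by (simp add: v_defs power2_eq_square diff_divide_distrib)
  also have "\<dots> = 1 / uq mu S" using u_pos unfolding u_eq[symmetric] by (simp add: power2_eq_square)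
  finally show ?thesis .
qed

definition "sq \<xi> = v0 mu S * \<xi>^2 - 2 * v1 mu S * \<xi> + v2 mu S"

lemma w_of_eq: "w_of mu S \<xi> = (v0 mu S * \<xi> - v1 mu S) *\<^sub>R (Sv *v mu) + (- v1 mu S * \<xi> + v2 mu S) *\<^sub>R (Sv *v e)"
  unfolding w_of_def vec1 by simp

lemma w_of_e: "w_of mu S \<xi> \<bullet> e = 1"
proof -
  have "w_of mu S \<xi> \<bullet> e = (v0 mu S * \<xi> - v1 mu S) * qB + (- v1 mu S * \<xi> + v2 mu S) * qA"
    unfolding w_of_eq qB_def qA_def q_def by (simp add: inner_add_left inner_add_right inner_commute)
  also have "\<dots> = ((qA * \<xi> - qB) * qB + (- qB * \<xi> + qC) * qA) / uq mu S"
    using u_pos by (simp add: v_defs field_simps)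
  also have "\<dots> = 1" using u_pos by (simp add: u_eq field_simps power2_eq_square)
  finally show ?thesis .
qed

lemma w_of_mu: "w_of mu S \<xi> \<bullet> mu = \<xi>"
proof -
  have "w_of mu S \<xi> \<bullet> mu = (v0 mu S * \<xi> - v1 mu S) * qC + (- v1 mu S * \<xi> + v2 mu S) * qB"
    unfolding w_of_eq qB_def qC_def using q_sym[of e mu] unfolding q_def
    by (simp add: inner_add_left inner_add_right inner_commute)
  also have "\<dots> = ((qA * \<xi> - qB) * qC + (- qB * \<xi> + qC) * qB) / uq mu S"
    using u_pos by (simp add: v_defs field_simps)
  also have "\<dots> = \<xi>" using u_pos by (simp add: u_eq field_simps power2_eq_square)
  finally show ?thesis .
qed

lemma e_w_of: "e \<bullet> w_of mu S \<xi> = 1" using w_of_e by (simp add: inner_commute)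
lemma mu_w_of: "mu \<bullet> w_of mu S \<xi> = \<xi>" using w_of_mu by (simp add: inner_commute)

lemma S_w_of: "S *v w_of mu S \<xi> = (v0 mu S * \<xi> - v1 mu S) *\<^sub>R mu + (- v1 mu S * \<xi> + v2 mu S) *\<^sub>R e"
  unfolding w_of_eq by (simp add: algebra_simps matrix_vector_mult_scaleR S_Si)

lemma var_w_of: "w_of mu S \<xi> \<bullet> (S *v w_of mu S \<xi>) = sq \<xi>"
  unfolding S_w_of sq_def
  by (simp add: inner_add_right e_w_of mu_w_of w_of_e w_of_mu power2_eq_square algebra_simps)

lemma sq_pos: "sq \<xi> > 0"
proof -
  have "w_of mu S \<xi> \<noteq> 0" by (metis inner_zero_left zero_neq_one w_of_e)
  thus ?thesis using Spos var_w_of by metis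
qed

lemma var_min:
  assumes "w \<bullet> e = 1" "w \<bullet> mu = \<xi>"
  shows "w \<bullet> (S *v w) \<ge> sq \<xi>" "w \<bullet> (S *v w) = sq \<xi> \<Longrightarrow> w = w_of mu S \<xi>"
proof -
  define w0 where "w0 = w_of mu S \<xi>"
  define d where "d = w - w0"
  have de: "d \<bullet> e = 0" "d \<bullet> mu = 0" unfolding d_def w0_def
    using assms w_of_e w_of_mu by (auto simp: inner_diff_left)
  have "d \<bullet> (S *v w0) = 0" unfolding w0_def S_w_of using de by (simp add: inner_add_right)
  moreover have "w0 \<bullet> (S *v d) = d \<bullet> (S *v w0)" using sym_inner[OF Ssym] by simp
  moreover have "w = w0 + d" unfolding d_def by simp
  ultimately have eq: "w \<bullet> (S *v w) = sq \<xi> + d \<bullet> (S *v d)"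
    unfolding w0_def by (simp add: algebra_simps inner_add_left inner_add_right var_w_of)
  thus "w \<bullet> (S *v w) \<ge> sq \<xi>" using Snn[of d] by simp
  assume "w \<bullet> (S *v w) = sq \<xi>"
  hence "d \<bullet> (S *v d) = 0" using eq by simp
  hence "d = 0" using Spos by (metis less_irrefl)
  thus "w = w_of mu S \<xi>" unfolding d_def w0_def by simp
qed

end


definition pp :: "real \<Rightarrow> real" where "pp y = (max y 0)^2"
definition Hf :: "real \<Rightarrow> real \<Rightarrow> real" where
  "Hf k s = s^2 + (max k 0)^2 - (max (s - max k 0) 0)^2 / 2"
definition al :: "real \<Rightarrow> real \<Rightarrow> real" where
  "al k s = (if k \<le> 0 then 1/2 else if k \<le> s then (1 + k/s)/2 else 1)"
definition fq :: "real \<Rightarrow> real \<Rightarrow> real \<Rightarrow> real" where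
  "fq q k s = (1 - q^2) * pp k + q^2/2 * (pp (k + s/q) + pp (k - s/q))"

lemma pp_nn: "pp y \<ge> 0" unfolding pp_def by simp

lemma Hf_neg: "k \<le> 0 \<Longrightarrow> s \<ge> 0 \<Longrightarrow> Hf k s = s^2/2"
  unfolding Hf_def by (simp add: max_def)

lemma Hf_pos1: "0 < k \<Longrightarrow> k \<le> s \<Longrightarrow> Hf k s = (s + k)^2/2"
  unfolding Hf_def by (simp add: max_def power2_eq_square field_simps)

lemma Hf_pos2: "0 < k \<Longrightarrow> s \<le> k \<Longrightarrow> Hf k s = s^2 + k^2"
  unfolding Hf_def by (simp add: max_def)

lemma pw_bound:
  assumes s: "s > 0"
  shows "(pp (y + k) + pp (k - y)) / 2 \<le> Hf k s + al k s * (y^2 - s^2)"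
proof -
  have sym: "(pp (y + k) + pp (k - y)) = (pp (\<bar>y\<bar> + k) + pp (k - \<bar>y\<bar>))"
    by (cases "y \<ge> 0") (auto simp: add.commute)
  define z where "z = \<bar>y\<bar>"
  have z: "z \<ge> 0" "y^2 = z^2" unfolding z_def by auto
  have zc: "(pp (z + k) + pp (k - z)) / 2 \<le> Hf k s + al k s * (z^2 - s^2)"
  proof (cases "k \<le> 0")
    case True
    have "pp (z + k) \<le> z^2" unfolding pp_def using True z
      by (simp add: max_def power_mono)
    moreover have "pp (k - z) = 0" unfolding pp_def using True z by (simp add: max_def)
    ultimately show ?thesis using True s by (simp add: Hf_neg al_def field_simps)
  next
    case False
    show ?thesis
    proof (cases "k \<le> s")
      case True
      have a: "al k s = (1 + k/s)/2" using False True by (simp add: al_def)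
      have H: "Hf k s = (s + k)^2/2" using False True by (simp add: Hf_pos1)
      have key: "(pp (z + k) + pp (k - z)) * s \<le> (s+k)^2 * s + (s + k) * (z^2 - s^2)"
      proof (cases "z \<ge> k")
        case True
        hence ppe: "pp (z + k) + pp (k - z) = (z+k)^2" unfolding pp_def using False z by (simp add: max_def)
        have "(s+k)^2 * s + (s + k) * (z^2 - s^2) - (z+k)^2 * s = k * (z - s)^2"
          by (simp add: power2_eq_square algebra_simps)
        moreover have "k * (z - s)^2 \<ge> 0" using False by simp
        ultimately show ?thesis unfolding ppe by linarith
      next
        case c2: False
        hence ppe: "pp (z + k) + pp (k - z) = (z+k)^2 + (k-z)^2" unfolding pp_def using False z by (simp add: max_def)
        have "(s+k)^2 * s + (s + k) * (z^2 - s^2) - ((z+k)^2 + (k-z)^2) * s = (s - k) * (k * s - z^2)"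
          by (simp add: power2_eq_square algebra_simps)
        moreover have "z * z \<le> k * s" using c2 z \<open>k \<le> s\<close> False
          by (intro mult_mono) auto
        hence "(s - k) * (k * s - z^2) \<ge> 0" using \<open>k \<le> s\<close> by (simp add: power2_eq_square)
        ultimately show ?thesis unfolding ppe by linarith
      qed
      have "(pp (z + k) + pp (k - z)) / 2 = (pp (z + k) + pp (k - z)) * s / (2 * s)" using s by simp
      also have "\<dots> \<le> ((s+k)^2 * s + (s + k) * (z^2 - s^2)) / (2 * s)"
        using key s by (intro divide_right_mono) auto
      also have "\<dots> = Hf k s + al k s * (z^2 - s^2)" unfolding a H using s
        by (simp add: field_simps power2_eq_square)
      finally show ?thesis .
    next
      case c: False
      have a: "al k s = 1" using False c by (simp add: al_def)
      have H: "Hf k s = s^2 + k^2" using False c by (simp add: Hf_pos2)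
      have "pp (z + k) + pp (k - z) \<le> (z+k)^2 + (k-z)^2" unfolding pp_def
        by (intro add_mono) (simp_all add: max_def)
      thus ?thesis unfolding a H by (simp add: power2_eq_square algebra_simps)
    qed
  qed
  have "(pp (y + k) + pp (k - y)) / 2 = (pp (z + k) + pp (k - z)) / 2" using sym unfolding z_def by simp
  with zc z(2) show ?thesis by simp
qed

lemma fq_le:
  assumes q: "0 < q" "q \<le> 1" and s: "s > 0"
  shows "fq q k s \<le> Hf k s"
proof -
  have b0: "pp k \<le> Hf k s + al k s * (0 - s^2)" using pw_bound[OF s, of 0 k] by simp
  have b1: "(pp (s/q + k) + pp (k - s/q))/2 \<le> Hf k s + al k s * ((s/q)^2 - s^2)"
    using pw_bound[OF s, of "s/q" k] by simp
  have "fq q k s = (1 - q^2) * pp k + q^2 * ((pp (s/q + k) + pp (k - s/q))/2)"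
    unfolding fq_def by (simp add: add.commute)
  also have "\<dots> \<le> (1 - q^2) * (Hf k s + al k s * (0 - s^2)) + q^2 * (Hf k s + al k s * ((s/q)^2 - s^2))"
    using q b0 b1 by (intro add_mono mult_left_mono) (auto simp: power_le_one)
  also have "\<dots> = Hf k s" using q by (simp add: power2_eq_square field_simps)
  finally show ?thesis .
qed

lemma fq_approx:
  assumes s: "s > 0" and e: "e > 0"
  shows "\<exists>q. 0 < q \<and> q \<le> 1 \<and> fq q k s > Hf k s - e"
proof (cases "k > 0")
  case True
  have "fq 1 k s = Hf k s"
  proof (cases "k \<le> s")
    case c: True
    thus ?thesis using True unfolding fq_def pp_def by (simp add: Hf_pos1 max_def add.commute)
  next
    case False
    have "pp (k + s) = (k+s)^2" "pp (k - s) = (k-s)^2" unfolding pp_def using True False s by auto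
    thus ?thesis using True False unfolding fq_def by (simp add: Hf_pos2 power2_eq_square field_simps)
  qed
  thus ?thesis using e by (intro exI[of _ 1]) auto
next
  case False
  define K where "K = - k"
  have K: "K \<ge> 0" using False K_def by simp
  define q where "q = min 1 (min (s/(K+1)) (e/(K * s + 1)))"
  have q0: "q > 0" unfolding q_def using s e K by (simp add: add_nonneg_pos)
  have q1: "q \<le> 1" unfolding q_def by simp
  have qK: "q * K < s"
  proof -
    have "q * K \<le> s/(K+1) * K" unfolding q_def using K by (intro mult_right_mono) auto
    also have "\<dots> < s" using s K by (simp add: field_simps)
    finally show ?thesis .
  qed
  have qKs: "q * K * s < e"
  proof -
    have "q * (K * s) \<le> e/(K * s + 1) * (K * s)" unfolding q_def using K s
      by (intro mult_right_mono) auto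
    also have "\<dots> < e"
    proof -
      have d: "K * s + 1 > 0" using s K by (simp add: add_nonneg_pos)
      have "e * (K * s) < e * (K * s + 1)" using e by simp
      hence "e * (K * s) / (K * s + 1) < e" by (simp add: pos_divide_less_eq[OF d])
      thus ?thesis by simp
    qed
    finally show ?thesis by (simp add: mult.assoc)
  qed
  have pos: "k + s/q \<ge> 0" using qK q0 unfolding K_def by (simp add: field_simps)
  have "fq q k s = q^2/2 * (k + s/q)^2" unfolding fq_def pp_def using False pos q0 s
    by (simp add: max_def)
  also have "\<dots> = (s + q * k)^2/2" using q0 by (simp add: power2_eq_square field_simps)
  also have "\<dots> \<ge> (s^2 - 2 * q * K * s)/2" unfolding K_def
    using zero_le_square[of "q * k"] by (simp add: power2_eq_square algebra_simps)
  finally have "fq q k s \<ge> (s^2 - 2 * q * K * s)/2" .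
  moreover have "Hf k s = s^2/2" using False s by (simp add: Hf_neg)
  ultimately have "fq q k s > Hf k s - e" using qKs by simp
  thus ?thesis using q0 q1 by blast
qed

lemma pp_mid: "pp ((a + b)/2) \<le> (pp a + pp b)/2"
proof -
  have m: "0 \<le> max ((a+b)/2) 0" "max ((a+b)/2) 0 \<le> (max a 0 + max b 0)/2" unfolding max_def by auto
  have "pp ((a + b)/2) \<le> ((max a 0 + max b 0)/2)^2" unfolding pp_def
    using m by (intro power_mono) auto
  also have "\<dots> \<le> (pp a + pp b)/2" unfolding pp_def
    using sum_squares_ge_zero[of "max a 0 - max b 0" 0]
    by (simp add: power2_eq_square field_simps)
  finally show ?thesis .
qed

lemma avg4: "(a+b)/2 + (c+d)/2 = ((a+c)+(b+d))/(2::real)" "(a+b)/2 - (c+d)/2 = ((a-c)+(b-d))/(2::real)"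
  by (simp_all add: field_simps)

lemma fq_mid:
  assumes "0 < q" "q \<le> 1"
  shows "fq q ((k1+k2)/2) ((s1+s2)/2) \<le> (fq q k1 s1 + fq q k2 s2)/2"
proof -
  have e0: "(s1+s2)/2/q = (s1/q + s2/q)/2" by (simp add: add_divide_distrib)
  have e1: "(k1+k2)/2 + (s1+s2)/2/q = ((k1 + s1/q) + (k2 + s2/q))/2" unfolding e0 by (rule avg4)
  have e2: "(k1+k2)/2 - (s1+s2)/2/q = ((k1 - s1/q) + (k2 - s2/q))/2" unfolding e0 by (rule avg4)
  have c1: "1 - q^2 \<ge> 0" using assms by (simp add: power_le_one)
  have "fq q ((k1+k2)/2) ((s1+s2)/2) \<le> (1 - q^2) * ((pp k1 + pp k2)/2)
     + q^2/2 * ((pp (k1 + s1/q) + pp (k2 + s2/q))/2 + (pp (k1 - s1/q) + pp (k2 - s2/q))/2)"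
    unfolding fq_def e1 e2 using c1
    by (intro add_mono mult_left_mono pp_mid) auto
  also have "\<dots> = (fq q k1 s1 + fq q k2 s2)/2" unfolding fq_def by (simp add: field_simps)
  finally show ?thesis .
qed

lemma Hf_mid:
  assumes "s1 > 0" "s2 > 0"
  shows "Hf ((k1+k2)/2) ((s1+s2)/2) \<le> (Hf k1 s1 + Hf k2 s2)/2"
proof (rule ccontr)
  assume "\<not> ?thesis"
  hence "Hf ((k1+k2)/2) ((s1+s2)/2) - (Hf k1 s1 + Hf k2 s2)/2 > 0" by simp
  then obtain q where q: "0 < q" "q \<le> 1"
    and h: "fq q ((k1+k2)/2) ((s1+s2)/2) > Hf ((k1+k2)/2) ((s1+s2)/2) - (Hf ((k1+k2)/2) ((s1+s2)/2) - (Hf k1 s1 + Hf k2 s2)/2)"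
    using fq_approx[of "(s1+s2)/2"] assms by (metis add_pos_pos half_gt_zero)
  have "fq q ((k1+k2)/2) ((s1+s2)/2) \<le> (Hf k1 s1 + Hf k2 s2)/2"
    using fq_mid[OF q, of k1 k2 s1 s2] fq_le[OF q assms(1), of k1] fq_le[OF q assms(2), of k2] by simp
  thus False using h by simp
qed

lemma Hf_mono:
  assumes "0 < s1" "s1 < s2"
  shows "Hf k s1 < Hf k s2"
proof (cases "k \<le> 0")
  case True thus ?thesis using assms by (simp add: Hf_neg power_strict_mono)
next
  case False
  hence k: "k > 0" by simp
  show ?thesis
  proof (cases "k \<le> s1")
    case True
    thus ?thesis using k assms by (simp add: Hf_pos1 power_strict_mono)
  next
    case c1: False
    show ?thesis
    proof (cases "k \<le> s2")
      case True
      have "s1^2 < k^2" using assms c1 by (simp add: power_strict_mono)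
      moreover have "(2*k)^2 \<le> (s2 + k)^2" using True k by (intro power_mono) auto
      ultimately show ?thesis using k True c1 assms
        by (simp add: Hf_pos1 Hf_pos2 power2_eq_square)
    next
      case False
      thus ?thesis using k c1 assms by (simp add: Hf_pos2 power_strict_mono)
    qed
  qed
qed

lemma Hf_cont: "continuous_on A f \<Longrightarrow> continuous_on A g \<Longrightarrow> continuous_on A (\<lambda>x. Hf (f x) (g x))"
  unfolding Hf_def by (intro continuous_intros) auto


definition psd :: "real^'n^'n \<Rightarrow> bool" where
  "psd C \<longleftrightarrow> transpose C = C \<and> (\<forall>x. x \<bullet> (C *v x) \<ge> 0)"

definition outer_sum :: "nat \<Rightarrow> (nat \<Rightarrow> real^'n) \<Rightarrow> real^'n^'n" where
  "outer_sum m c = (\<chi> a b. \<Sum>l<m. c l $ a * c l $ b)"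

definition outer :: "real^'n \<Rightarrow> real^'n^'n" where
  "outer v = (\<chi> a b. v $ a * v $ b)"

lemma outer_quad: "x \<bullet> (outer v *v x) = (v \<bullet> x)^2"
proof -
  have "x \<bullet> (outer v *v x) = (\<Sum>i\<in>UNIV. \<Sum>n\<in>UNIV. (v$i*x$i)*(v$n*x$n))"
    by (simp add: outer_def inner_vec_def matrix_vector_mult_def sum_distrib_left mult_ac)
  also have "\<dots> = (\<Sum>i\<in>UNIV. v$i*x$i)*(\<Sum>n\<in>UNIV. v$n*x$n)" by (simp add: sum_product)
  also have "\<dots> = (v \<bullet> x)^2" by (simp add: inner_vec_def power2_eq_square)
  finally show ?thesis .
qed

lemma outer_sum_Suc: "outer_sum (Suc m) c = outer_sum m c + outer (c m)"
  by (simp add: outer_sum_def outer_def vec_eq_iff)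

lemma outer_sum_0: "outer_sum 0 c = 0"
  by (simp add: outer_sum_def vec_eq_iff)

lemma outer_sum_quad: "x \<bullet> (outer_sum m c *v x) = (\<Sum>l<m. (c l \<bullet> x)^2)"
  by (induction m) (simp_all add: outer_sum_0 outer_sum_Suc matrix_vector_mult_add_rdistrib inner_add_right outer_quad)

lemma entry_inner: "axis a 1 \<bullet> (C *v axis b 1) = (C::real^'n^'n) $ a $ b"
  by (simp add: inner_axis' matrix_vector_mult_basis column_def)

lemma psd_cs:
  assumes "psd C"
  shows "(x \<bullet> (C *v y))^2 \<le> (x \<bullet> (C *v x)) * (y \<bullet> (C *v y))"
proof -
  have sym: "y \<bullet> (C *v x) = x \<bullet> (C *v y)" using assms sym_inner unfolding psd_def by metis
  have nn: "\<And>z. z \<bullet> (C *v z) \<ge> 0" using assms unfolding psd_def by auto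
  define a where "a = x \<bullet> (C *v x)"
  define b where "b = x \<bullet> (C *v y)"
  define c where "c = y \<bullet> (C *v y)"
  have quad: "a + 2 * l * b + l^2 * c \<ge> 0" for l
  proof -
    have "(x + l *\<^sub>R y) \<bullet> (C *v (x + l *\<^sub>R y)) = a + 2 * l * b + l^2 * c"
      unfolding a_def b_def c_def using sym
      by (simp add: algebra_simps inner_add_left inner_add_right matrix_vector_mult_scaleR power2_eq_square)
    thus ?thesis using nn by metis
  qed
  show ?thesis
  proof (cases "c = 0")
    case True
    show ?thesis
    proof (rule ccontr)
      assume "\<not> ?thesis"
      hence "b \<noteq> 0" using True unfolding a_def b_def c_def by auto
      have "a + 2 * (-(a+1)/(2*b)) * b + (-(a+1)/(2*b))^2 * c \<ge> 0" by (rule quad)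
      thus False using True \<open>b \<noteq> 0\<close> by (simp add: field_simps)
    qed
  next
    case False
    hence c0: "c > 0" using nn unfolding c_def by (metis less_eq_real_def)
    have "a + 2 * (-b/c) * b + (-b/c)^2 * c \<ge> 0" by (rule quad)
    hence "a - b^2 / c \<ge> 0" using c0 by (simp add: power2_eq_square field_simps)
    hence "b^2 \<le> a * c" using c0 by (simp add: field_simps)
    thus ?thesis unfolding a_def b_def c_def .
  qed
qed

lemma psd_diag_nn: "psd C \<Longrightarrow> C $ i $ i \<ge> 0"
  using entry_inner[of i C i] unfolding psd_def by metis

lemma psd_diag_zero: "psd C \<Longrightarrow> C $ i $ i = 0 \<Longrightarrow> C $ i $ j = 0"
  using psd_cs[of C "axis i 1" "axis j 1"] entry_inner[of i C i] entry_inner[of j C j] entry_inner[of i C j]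
  by simp

lemma psd_decomp_aux:
  "\<And>C::real^'n^'n. card {i. C $ i $ i \<noteq> 0} = N \<Longrightarrow> psd C \<Longrightarrow> \<exists>m c. C = outer_sum m c"
proof (induction N rule: less_induct)
  case (less N C)
  show ?case
  proof (cases "\<forall>i. C $ i $ i = 0")
    case True
    hence "C = outer_sum 0 c" for c using psd_diag_zero[OF less.prems(2)]
      by (simp add: outer_sum_def vec_eq_iff)
    thus ?thesis by blast
  next
    case False
    then obtain i where i: "C $ i $ i \<noteq> 0" by blast
    hence Cii: "C $ i $ i > 0" using psd_diag_nn[OF less.prems(2), of i] by simp
    define c where "c = (1 / sqrt (C $ i $ i)) *\<^sub>R (C *v axis i 1)"
    have cent: "c $ a = C $ a $ i / sqrt (C $ i $ i)" for a
      unfolding c_def by (simp add: matrix_vector_mult_basis column_def)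
    define C' where "C' = C - outer c"
    have C'ent: "C' $ a $ b = C $ a $ b - C $ a $ i * C $ b $ i / C $ i $ i" for a b
      unfolding C'_def outer_def using Cii by (simp add: cent real_sqrt_mult[symmetric])
    have symC: "transpose C = C" using less.prems(2) unfolding psd_def by simp
    have Cs: "C $ a $ b = C $ b $ a" for a b using symC
      by (metis transpose_def vec_lambda_beta)
    have psd': "psd C'"
      unfolding psd_def
    proof
      show "transpose C' = C'"
        by (simp add: vec_eq_iff transpose_def C'ent Cs mult.commute)
      show "\<forall>x. 0 \<le> x \<bullet> (C' *v x)"
      proof
        fix x
        have "(x \<bullet> (C *v axis i 1))^2 \<le> (x \<bullet> (C *v x)) * C $ i $ i"
          using psd_cs[OF less.prems(2), of x "axis i 1"] entry_inner[of i C i] by simp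
        moreover have "(c \<bullet> x)^2 = (x \<bullet> (C *v axis i 1))^2 / C $ i $ i"
          unfolding c_def using Cii by (simp add: power2_eq_square inner_commute)
        ultimately have "(c \<bullet> x)^2 \<le> x \<bullet> (C *v x)" using Cii by (simp add: divide_le_eq)
        moreover have "x \<bullet> (C' *v x) = x \<bullet> (C *v x) - (c \<bullet> x)^2"
          unfolding C'_def by (simp add: matrix_vector_mult_diff_rdistrib inner_diff_right outer_quad)
        ultimately show "0 \<le> x \<bullet> (C' *v x)" by simp
      qed
    qed
    have sub: "{j. C' $ j $ j \<noteq> 0} \<subseteq> {j. C $ j $ j \<noteq> 0} - {i}"
    proof
      fix j assume "j \<in> {j. C' $ j $ j \<noteq> 0}"
      hence j: "C' $ j $ j \<noteq> 0" by simp
      have "j \<noteq> i" using j Cii by (auto simp: C'ent power2_eq_square)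
      moreover have "C $ j $ j \<noteq> 0"
      proof
        assume "C $ j $ j = 0"
        hence "C $ j $ i = 0" using psd_diag_zero[OF less.prems(2)] by simp
        thus False using j \<open>C $ j $ j = 0\<close> by (simp add: C'ent)
      qed
      ultimately show "j \<in> {j. C $ j $ j \<noteq> 0} - {i}" by simp
    qed
    have "card {j. C' $ j $ j \<noteq> 0} < N"
    proof -
      have "card {j. C' $ j $ j \<noteq> 0} \<le> card ({j. C $ j $ j \<noteq> 0} - {i})"
        using sub by (intro card_mono) auto
      also have "\<dots> < card {j. C $ j $ j \<noteq> 0}" using i by (intro card_Diff1_less) auto
      finally show ?thesis using less.prems(1) by simp
    qed
    then obtain m c' where m: "C' = outer_sum m c'" using less.IH[OF _ refl psd'] by blast
    have "C = outer_sum (Suc m) (c'(m := c))"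
    proof -
      have "C $ a $ b = outer_sum (Suc m) (c'(m := c)) $ a $ b" for a b
      proof -
        have "outer_sum m (c'(m := c)) = outer_sum m c'"
          unfolding outer_sum_def by (intro arg_cong[where f=vec_lambda] ext sum.cong) auto
        hence "outer_sum (Suc m) (c'(m := c)) $ a $ b = C' $ a $ b + c $ a * c $ b"
          unfolding m outer_sum_Suc by (simp add: outer_def)
        also have "\<dots> = C $ a $ b" using Cii
          by (simp add: C'ent cent real_sqrt_mult[symmetric] field_simps)
        finally show ?thesis by simp
      qed
      thus ?thesis by (simp add: vec_eq_iff)
    qed
    thus ?thesis by blast
  qed
qed

lemma psd_decomp: "psd C \<Longrightarrow> \<exists>m c. C = outer_sum m c"
  using psd_decomp_aux by blast


lemma pp_meas[measurable]: "pp \<in> borel_measurable borel"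
  unfolding pp_def by measurable

lemma pp_le: "pp (y + k) \<le> 2 * y^2 + 2 * k^2"
proof -
  have "pp (y + k) \<le> (y + k)^2" unfolding pp_def by (simp add: max_def)
  also have "\<dots> \<le> 2 * y^2 + 2 * k^2" using sum_squares_ge_zero[of "y - k" 0]
    by (simp add: power2_eq_square algebra_simps)
  finally show ?thesis .
qed

lemma sym_bound:
  fixes M :: "'a measure" and Y :: "'a \<Rightarrow> real"
  assumes P: "prob_space M" and Ym: "Y \<in> borel_measurable M"
    and Yi: "integrable M (\<lambda>x. (Y x)^2)"
    and sym: "\<And>g::real\<Rightarrow>real. g \<in> borel_measurable borel \<Longrightarrow> (\<integral>x. g (Y x) \<partial>M) = (\<integral>x. g (- Y x) \<partial>M)"
    and var: "(\<integral>x. (Y x)^2 \<partial>M) = s^2" and s: "s > 0"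
  shows "integrable M (\<lambda>x. pp (Y x + k))" "(\<integral>x. pp (Y x + k) \<partial>M) \<le> Hf k s"
proof -
  interpret prob_space M by (rule P)
  have ci: "integrable M (\<lambda>x. c)" for c :: real by simp
  have m1: "(\<lambda>x. pp (Y x + k)) \<in> borel_measurable M" using Ym by measurable
  have m2: "(\<lambda>x. pp (k - Y x)) \<in> borel_measurable M" using Ym by measurable
  have bi: "integrable M (\<lambda>x. 2 * (Y x)^2 + 2 * k^2)" using Yi by simp
  have i1: "integrable M (\<lambda>x. pp (Y x + k))"
    apply (rule Bochner_Integration.integrable_bound[OF bi m1])
    using pp_le[of "Y _" k] by (auto simp: pp_nn intro!: AE_I2)
  show "integrable M (\<lambda>x. pp (Y x + k))" by (rule i1)
  have i2: "integrable M (\<lambda>x. pp (k - Y x))"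
    using bi m2 apply (rule Bochner_Integration.integrable_bound)
    using pp_le[of "- Y _" k] by (auto simp: pp_nn intro!: AE_I2)
  have eq: "(\<integral>x. pp (Y x + k) \<partial>M) = (\<integral>x. pp (k - Y x) \<partial>M)"
    using sym[of "\<lambda>y. pp (y + k)"] by (simp add: add.commute)
  have "(\<integral>x. pp (Y x + k) \<partial>M) = (\<integral>x. (pp (Y x + k) + pp (k - Y x)) / 2 \<partial>M)"
    using eq i1 i2 by simp
  also have "\<dots> \<le> (\<integral>x. Hf k s + al k s * ((Y x)^2 - s^2) \<partial>M)"
    using i1 i2 Yi pw_bound[OF s, of "Y _" k] by (intro integral_mono) auto
  also have "\<dots> = Hf k s" using Yi var by (simp add: algebra_simps prob_space)
  finally show "(\<integral>x. pp (Y x + k) \<partial>M) \<le> Hf k s" .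
qed


lemma uminus_image_iff: "(z::'a::group_add) \<in> uminus ` A \<longleftrightarrow> - z \<in> A"
  by (metis image_iff minus_minus)

lemma MS_basic:
  fixes mu :: "real^'n" and S :: "real^'n^'n"
  assumes "G \<in> MS mu S"
  shows "prob_space G" "sets G = sets borel" "space G = UNIV"
    "\<And>i. integrable G (\<lambda>x. x$i)" "\<And>i. (\<integral>x. x$i \<partial>G) = mu$i"
    "\<And>i j. integrable G (\<lambda>x. x$i * x$j)" "\<And>i j. (\<integral>x. x$i * x$j \<partial>G) = S$i$j + mu$i * mu$j"
  using assms unfolding MS_def
  by (auto dest: sets_eq_imp_space_eq simp: algebra_simps)

lemma MS_sym:
  fixes g :: "real^'n \<Rightarrow> real" and mu :: "real^'n" and S :: "real^'n^'n"
  assumes G: "G \<in> MS mu S" and g: "g \<in> borel_measurable borel"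
  shows "(\<integral>x. g (x - mu) \<partial>G) = (\<integral>x. g (mu - x) \<partial>G)"
proof -
  note B = MS_basic[OF G]
  interpret prob_space G by (rule B(1))
  obtain a where A: "\<forall>B \<in> sets borel. measure G {x. x - a \<in> B} = measure G {x. x - a \<in> uminus ` B}"
    using G unfolding MS_def by auto
  have mc: "measurable G borel = measurable borel borel" by (rule measurable_cong_sets[OF B(2) refl])
  have f1: "(\<lambda>x. x - a) \<in> measurable G borel" unfolding mc by measurable
  have f2: "(\<lambda>x. - (x - a)) \<in> measurable G borel" unfolding mc by measurable
  have D: "distr G borel (\<lambda>x. x - a) = distr G borel (\<lambda>x. - (x - a))"
  proof (rule measure_eqI)
    show "sets (distr G borel (\<lambda>x. x - a)) = sets (distr G borel (\<lambda>x. - (x - a)))" by simp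
  next
    fix X assume "X \<in> sets (distr G borel (\<lambda>x. x - a))"
    hence X: "X \<in> sets borel" by simp
    have "emeasure (distr G borel (\<lambda>x. x - a)) X = emeasure G {x. x - a \<in> X}"
      using emeasure_distr[OF f1 X] B(3) by (simp add: vimage_def)
    also have "\<dots> = ennreal (measure G {x. x - a \<in> X})" by (simp add: emeasure_eq_measure)
    also have "\<dots> = ennreal (measure G {x. x - a \<in> uminus ` X})" using A X by simp
    also have "\<dots> = emeasure G {x. - (x - a) \<in> X}" by (simp add: emeasure_eq_measure uminus_image_iff)
    also have "\<dots> = emeasure (distr G borel (\<lambda>x. - (x - a))) X"
      using emeasure_distr[OF f2 X] B(3) by (simp add: vimage_def)
    finally show "emeasure (distr G borel (\<lambda>x. x - a)) X = emeasure (distr G borel (\<lambda>x. - (x - a))) X" .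
  qed
  have gen: "(\<integral>x. h (x - a) \<partial>G) = (\<integral>x. h (- (x - a)) \<partial>G)" if h: "h \<in> borel_measurable borel" for h :: "real^'n \<Rightarrow> real"
  proof -
    have "(\<integral>x. h (x - a) \<partial>G) = integral\<^sup>L (distr G borel (\<lambda>x. x - a)) h"
      by (rule integral_distr[OF f1 h, symmetric])
    also have "\<dots> = integral\<^sup>L (distr G borel (\<lambda>x. - (x - a))) h" using D by simp
    also have "\<dots> = (\<integral>x. h (- (x - a)) \<partial>G)" by (rule integral_distr[OF f2 h])
    finally show ?thesis .
  qed
  have ai: "a $ i = mu $ i" for i
  proof -
    have "(\<integral>x. (x - a) $ i \<partial>G) = (\<integral>x. (- (x - a)) $ i \<partial>G)" by (rule gen) measurable
    hence "(\<integral>x. x $ i - a $ i \<partial>G) = (\<integral>x. a $ i - x $ i \<partial>G)" by simp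
    hence "mu $ i - a $ i = a $ i - mu $ i" using B(4,5) by (simp add: prob_space)
    thus "a $ i = mu $ i" by simp
  qed
  hence "a = mu" by (simp add: vec_eq_iff)
  thus ?thesis using gen[OF g] by simp
qed

lemma MS_var:
  fixes mu :: "real^'n" and S :: "real^'n^'n"
  assumes G: "G \<in> MS mu S"
  shows "integrable G (\<lambda>x. (w \<bullet> (x - mu))^2)" "(\<integral>x. (w \<bullet> (x - mu))^2 \<partial>G) = w \<bullet> (S *v w)"
proof -
  note B = MS_basic[OF G]
  interpret prob_space G by (rule B(1))
  define P where "P i j x = x$i * x$j - mu$i * x$j - mu$j * x$i + mu$i * mu$j" for i j and x :: "real^'n"
  have Pi: "integrable G (P i j)" for i j unfolding P_def using B(4,6) by auto
  have PI: "(\<integral>x. P i j x \<partial>G) = S$i$j" for i j unfolding P_def using B(4,5,6,7) by (simp add: prob_space)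
  have sq: "(w \<bullet> (x - mu))^2 = (\<Sum>i\<in>UNIV. \<Sum>j\<in>UNIV. w$i * w$j * P i j x)" for x
  proof -
    have "(w \<bullet> (x - mu))^2 = (\<Sum>i\<in>UNIV. w$i * (x$i - mu$i)) * (\<Sum>j\<in>UNIV. w$j * (x$j - mu$j))"
      by (simp add: inner_vec_def power2_eq_square)
    also have "\<dots> = (\<Sum>i\<in>UNIV. \<Sum>j\<in>UNIV. w$i * w$j * P i j x)"
      by (simp add: sum_product P_def algebra_simps)
    finally show ?thesis .
  qed
  show "integrable G (\<lambda>x. (w \<bullet> (x - mu))^2)" unfolding sq using Pi by auto
  have "(\<integral>x. (w \<bullet> (x - mu))^2 \<partial>G) = (\<Sum>i\<in>UNIV. \<Sum>j\<in>UNIV. w$i * w$j * (\<integral>x. P i j x \<partial>G))"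
    unfolding sq using Pi by (simp add: integral_sum integrable_sum)
  also have "\<dots> = w \<bullet> (S *v w)"
    by (simp add: PI inner_vec_def matrix_vector_mult_def sum_distrib_left mult_ac)
  finally show "(\<integral>x. (w \<bullet> (x - mu))^2 \<partial>G) = w \<bullet> (S *v w)" .
qed

lemma MS_upper:
  fixes mu :: "real^'n" and S :: "real^'n^'n"
  assumes G: "G \<in> MS mu S" and s: "w \<bullet> (S *v w) > 0"
  shows "(\<integral>x. (max (w \<bullet> x - t) 0)^2 \<partial>G) \<le> Hf (w \<bullet> mu - t) (sqrt (w \<bullet> (S *v w)))"
proof -
  note B = MS_basic[OF G]
  have mc: "measurable G borel = measurable borel borel" by (rule measurable_cong_sets[OF B(2) refl])
  have Ym: "(\<lambda>x. w \<bullet> (x - mu)) \<in> borel_measurable G" unfolding mc by measurable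
  have sym: "(\<integral>x. g (w \<bullet> (x - mu)) \<partial>G) = (\<integral>x. g (- (w \<bullet> (x - mu))) \<partial>G)"
    if "g \<in> borel_measurable borel" for g :: "real \<Rightarrow> real"
  proof -
    have "(\<lambda>z. g (w \<bullet> z)) \<in> borel_measurable borel" using that by measurable
    from MS_sym[OF G this] show ?thesis by (simp add: inner_diff_right)
  qed
  have "(\<integral>x. pp (w \<bullet> (x - mu) + (w \<bullet> mu - t)) \<partial>G) \<le> Hf (w \<bullet> mu - t) (sqrt (w \<bullet> (S *v w)))"
    using sym_bound(2)[OF B(1) Ym MS_var(1)[OF G] sym] MS_var(2)[OF G] s by simp
  thus ?thesis unfolding pp_def by (simp add: inner_diff_right)
qed

lemma LS_sym:
  fixes g :: "real \<Rightarrow> real"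
  assumes F: "F \<in> LS a s" and g: "g \<in> borel_measurable borel"
  shows "(\<integral>x. g (x - a) \<partial>F) = (\<integral>x. g (a - x) \<partial>F)"
proof -
  have P: "prob_space F" and sF: "sets F = sets borel" and ix: "integrable F (\<lambda>x. x)"
    and ex: "(\<integral>x. x \<partial>F) = a"
    using F unfolding LS_def by auto
  interpret prob_space F by (rule P)
  have spF: "space F = UNIV" using sets_eq_imp_space_eq[OF sF] by simp
  obtain b where A: "\<forall>x. measure F {y. y - b > x} = measure F {y. y - b < - x}"
    using F unfolding LS_def by auto
  have mc: "measurable F borel = measurable borel borel" by (rule measurable_cong_sets[OF sF refl])
  have f1: "(\<lambda>x. x - b) \<in> measurable F borel" unfolding mc by measurable
  have f2: "(\<lambda>x. b - x) \<in> measurable F borel" unfolding mc by measurable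
  have ev: "{y. c < y - b} \<in> events" "{y. y - b < c} \<in> events" for c
  proof -
    have "{y. c < y - b} = {b + c <..}" "{y. y - b < c} = {..< b + c}" by auto
    thus "{y. c < y - b} \<in> events" "{y. y - b < c} \<in> events" unfolding sF by auto
  qed
  have c1: "measure F {y. y - b \<le> x} = 1 - measure F {y. y - b > x}" for x
  proof -
    have "{y. y - b \<le> x} = space F - {y. y - b > x}" using spF by auto
    thus ?thesis using prob_compl[OF ev(1)] by simp
  qed
  have c2: "measure F {y. b - y \<le> x} = 1 - measure F {y. y - b > x}" for x
  proof -
    have "{y. b - y \<le> x} = space F - {y. y - b < - x}" using spF by auto
    thus ?thesis using prob_compl[OF ev(2)] A by simp
  qed
  have D: "distr F borel (\<lambda>x. x - b) = distr F borel (\<lambda>x. b - x)"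
  proof (rule cdf_unique)
    show "real_distribution (distr F borel (\<lambda>x. x - b))"
      unfolding real_distribution_def real_distribution_axioms_def using prob_space_distr[OF f1] by simp
    show "real_distribution (distr F borel (\<lambda>x. b - x))"
      unfolding real_distribution_def real_distribution_axioms_def using prob_space_distr[OF f2] by simp
    show "cdf (distr F borel (\<lambda>x. x - b)) = cdf (distr F borel (\<lambda>x. b - x))"
    proof
      fix x
      have "cdf (distr F borel (\<lambda>x. x - b)) x = measure F {y. y - b \<le> x}"
        unfolding cdf_def using measure_distr[OF f1, of "{..x}"] spF by (simp add: vimage_def)
      moreover have "cdf (distr F borel (\<lambda>x. b - x)) x = measure F {y. b - y \<le> x}"
        unfolding cdf_def using measure_distr[OF f2, of "{..x}"] spF by (simp add: vimage_def)
      ultimately show "cdf (distr F borel (\<lambda>x. x - b)) x = cdf (distr F borel (\<lambda>x. b - x)) x"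
        using c1 c2 by simp
    qed
  qed
  have gen: "(\<integral>x. h (x - b) \<partial>F) = (\<integral>x. h (b - x) \<partial>F)" if h: "h \<in> borel_measurable borel" for h :: "real \<Rightarrow> real"
  proof -
    have "(\<integral>x. h (x - b) \<partial>F) = integral\<^sup>L (distr F borel (\<lambda>x. x - b)) h"
      by (rule integral_distr[OF f1 h, symmetric])
    also have "\<dots> = integral\<^sup>L (distr F borel (\<lambda>x. b - x)) h" using D by simp
    also have "\<dots> = (\<integral>x. h (b - x) \<partial>F)" by (rule integral_distr[OF f2 h])
    finally show ?thesis .
  qed
  have "(\<integral>x. x - b \<partial>F) = (\<integral>x. b - x \<partial>F)" using gen[of "\<lambda>z. z"] by simp
  hence "a - b = b - a" using ix ex by (simp add: prob_space)
  hence "b = a" by simp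
  thus ?thesis using gen[OF g] by simp
qed

lemma LS_upper:
  assumes F: "F \<in> LS a s" and s: "s > 0"
  shows "(\<integral>x. (max (x - t) 0)^2 \<partial>F) \<le> Hf (a - t) s"
proof -
  have P: "prob_space F" and sF: "sets F = sets borel" and ix: "integrable F (\<lambda>x. x)"
    and ix2: "integrable F (\<lambda>x. x^2)" and ex: "(\<integral>x. x \<partial>F) = a"
    and ex2: "(\<integral>x. x^2 \<partial>F) = a^2 + s^2"
    using F unfolding LS_def by auto
  interpret prob_space F by (rule P)
  have mc: "measurable F borel = measurable borel borel" by (rule measurable_cong_sets[OF sF refl])
  have Ym: "(\<lambda>x. x - a) \<in> borel_measurable F" unfolding mc by measurable
  have sq: "(x - a)^2 = x^2 - 2 * a * x + a^2" for x by (simp add: power2_eq_square algebra_simps)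
  have Yi: "integrable F (\<lambda>x. (x - a)^2)" unfolding sq using ix ix2 by simp
  have var: "(\<integral>x. (x - a)^2 \<partial>F) = s^2" unfolding sq using ix ix2 ex ex2
    by (simp add: prob_space power2_eq_square)
  have sym: "(\<integral>x. g (x - a) \<partial>F) = (\<integral>x. g (- (x - a)) \<partial>F)"
    if "g \<in> borel_measurable borel" for g :: "real \<Rightarrow> real"
    using LS_sym[OF F that] by simp
  have "(\<integral>x. pp (x - a + (a - t)) \<partial>F) \<le> Hf (a - t) s"
    by (rule sym_bound(2)[OF P Ym Yi sym var s])
  thus ?thesis unfolding pp_def by simp
qed


definition Qp :: "real \<Rightarrow> real \<Rightarrow> real pmf" where
  "Qp q r = map_pmf (\<lambda>(b, e). if b then e * r else 0) (pair_pmf (bernoulli_pmf (q^2)) (pmf_of_set {-1, 1::real}))"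

definition Zp :: "nat \<Rightarrow> (nat \<Rightarrow> real^'n) \<Rightarrow> (real^'n) pmf" where
  "Zp m c = map_pmf (\<lambda>(j, e). (e * sqrt m) *\<^sub>R c j) (pair_pmf (pmf_of_set {..<m}) (pmf_of_set {-1, 1::real}))"

lemma fin_bern: "finite (set_pmf (bernoulli_pmf p))"
  by (rule finite_subset[of _ UNIV]) auto

lemma fin_Qp: "finite (set_pmf (Qp q r))"
  unfolding Qp_def by (simp add: fin_bern)

lemma fin_Zp: "m > 0 \<Longrightarrow> finite (set_pmf (Zp m c))"
  unfolding Zp_def by (simp add: set_pmf_of_set lessThan_empty_iff)

lemma pair_exp:
  fixes h :: "'a \<times> 'b \<Rightarrow> real"
  assumes "finite (set_pmf p)" "finite (set_pmf q)"
  shows "measure_pmf.expectation (pair_pmf p q) h = measure_pmf.expectation p (\<lambda>a. measure_pmf.expectation q (\<lambda>b. h (a, b)))"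
proof -
  have "measure_pmf.expectation (pair_pmf p q) h = (\<Sum>x\<in>set_pmf p \<times> set_pmf q. h x * pmf (pair_pmf p q) x)"
    using assms by (intro integral_measure_pmf_real) auto
  also have "\<dots> = (\<Sum>a\<in>set_pmf p. \<Sum>b\<in>set_pmf q. h (a, b) * (pmf p a * pmf q b))"
    by (subst sum.cartesian_product) (auto intro!: sum.cong simp: pmf_pair)
  also have "\<dots> = (\<Sum>a\<in>set_pmf p. (\<Sum>b\<in>set_pmf q. h (a, b) * pmf q b) * pmf p a)"
    by (simp add: sum_distrib_right sum_distrib_left mult_ac)
  also have "\<dots> = measure_pmf.expectation p (\<lambda>a. measure_pmf.expectation q (\<lambda>b. h (a, b)))"
    using assms by (subst integral_measure_pmf_real[of "set_pmf p"]; simp)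
      (intro sum.cong refl arg_cong2[where f="(*)"], subst integral_measure_pmf_real[of "set_pmf q"], auto)
  finally show ?thesis .
qed

lemma pm1_exp: fixes h :: "real \<Rightarrow> real" shows "measure_pmf.expectation (pmf_of_set {-1, 1::real}) h = (h 1 + h (-1)) / 2"
  by (subst integral_pmf_of_set) auto

lemma Q_exp:
  assumes "0 < q" "q \<le> 1"
  shows "measure_pmf.expectation (Qp q r) h = (1 - q^2) * h 0 + q^2/2 * (h r + h (-r))"
proof -
  have q2: "0 \<le> q^2" "q^2 \<le> 1" using assms by (auto simp: power_le_one)
  have "measure_pmf.expectation (Qp q r) h =
     measure_pmf.expectation (pair_pmf (bernoulli_pmf (q^2)) (pmf_of_set {-1, 1::real})) (\<lambda>x. h ((\<lambda>(b, e). if b then e * r else 0) x))"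
    unfolding Qp_def by simp
  also have "\<dots> = (1 - q^2) * h 0 + q^2/2 * (h r + h (-r))"
    by (subst pair_exp) (auto simp: fin_bern q2 pm1_exp field_simps)
  finally show ?thesis .
qed

lemma Z_exp:
  assumes "m > 0"
  shows "measure_pmf.expectation (Zp m c) h = (\<Sum>l<m. (h (sqrt m *\<^sub>R c l) + h (- (sqrt m *\<^sub>R c l))) / 2) / m"
proof -
  have "measure_pmf.expectation (Zp m c) h =
     measure_pmf.expectation (pair_pmf (pmf_of_set {..<m}) (pmf_of_set {-1, 1::real})) (\<lambda>x. h ((\<lambda>(j, e). (e * sqrt m) *\<^sub>R c j) x))"
    unfolding Zp_def by simp
  also have "\<dots> = (\<Sum>l<m. (h (sqrt m *\<^sub>R c l) + h (- (sqrt m *\<^sub>R c l))) / 2) / m"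
    using assms by (subst pair_exp) (auto simp: pm1_exp integral_pmf_of_set lessThan_empty_iff
      sum_divide_distrib[symmetric] divide_divide_eq_left mult.commute)
  finally show ?thesis .
qed

lemma map_pm1: "map_pmf uminus (pmf_of_set {-1, 1::real}) = pmf_of_set {-1, 1}"
proof -
  have "map_pmf uminus (pmf_of_set {-1, 1::real}) = pmf_of_set (uminus ` {-1, 1})"
    by (rule map_pmf_of_set_inj) auto
  also have "uminus ` {-1, 1::real} = {-1, 1}" by auto
  finally show ?thesis .
qed

lemma Q_sym: "map_pmf uminus (Qp q r) = Qp q r"
proof -
  have "map_pmf uminus (Qp q r) = map_pmf (\<lambda>(b, e). if b then e * r else 0)
     (map_pmf (\<lambda>(b, e). (id b, uminus e)) (pair_pmf (bernoulli_pmf (q^2)) (pmf_of_set {-1, 1::real})))"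
    unfolding Qp_def pmf.map_comp by (intro map_pmf_cong) auto
  also have "map_pmf (\<lambda>(b, e). (id b, uminus e)) (pair_pmf (bernoulli_pmf (q^2)) (pmf_of_set {-1, 1::real}))
     = pair_pmf (bernoulli_pmf (q^2)) (pmf_of_set {-1, 1::real})"
    unfolding map_pair by (simp add: map_pm1)
  finally show ?thesis unfolding Qp_def .
qed

lemma Z_sym: "map_pmf uminus (Zp m c) = Zp m c"
proof -
  have "map_pmf uminus (Zp m c) = map_pmf (\<lambda>(j, e). (e * sqrt m) *\<^sub>R c j)
     (map_pmf (\<lambda>(j, e). (id j, uminus e)) (pair_pmf (pmf_of_set {..<m}) (pmf_of_set {-1, 1::real})))"
    unfolding Zp_def pmf.map_comp by (intro map_pmf_cong) auto
  also have "map_pmf (\<lambda>(j, e). (id j, uminus e)) (pair_pmf (pmf_of_set {..<m}) (pmf_of_set {-1, 1::real}))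
     = pair_pmf (pmf_of_set {..<m}) (pmf_of_set {-1, 1::real})"
    unfolding map_pair by (simp add: map_pm1)
  finally show ?thesis unfolding Zp_def .
qed


lemma Z_lin:
  assumes "m > 0"
  shows "measure_pmf.expectation (Zp m c) (\<lambda>z. A + z $ i) = A"
  using assms by (simp add: Z_exp)

lemma Z_quad:
  assumes "m > 0"
  shows "measure_pmf.expectation (Zp m c) (\<lambda>z. (A + z $ i) * (B + z $ j)) = A * B + outer_sum m c $ i $ j"
proof -
  define v where "v l = sqrt m *\<^sub>R c l" for l
  have t: "((A + v l $ i) * (B + v l $ j) + (A + (- v l) $ i) * (B + (- v l) $ j)) / 2 = A * B + m * (c l $ i * c l $ j)" for l
  proof -
    have "((A + v l $ i) * (B + v l $ j) + (A + (- v l) $ i) * (B + (- v l) $ j)) / 2 = A * B + v l $ i * v l $ j"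
      by (simp add: algebra_simps)
    moreover have "v l $ i * v l $ j = sqrt m * sqrt m * (c l $ i * c l $ j)" by (simp add: v_def mult_ac)
    moreover have "sqrt (real m) * sqrt (real m) = real m" by simp
    ultimately show ?thesis by simp
  qed
  have "measure_pmf.expectation (Zp m c) (\<lambda>z. (A + z $ i) * (B + z $ j)) =
        (\<Sum>l<m. A * B + m * (c l $ i * c l $ j)) / m"
    using assms unfolding Z_exp[OF assms] v_def[symmetric] t by simp
  also have "\<dots> = A * B + outer_sum m c $ i $ j"
    using assms by (simp add: sum.distrib outer_sum_def add_divide_distrib flip: sum_distrib_left)
  finally show ?thesis .
qed

lemma Z_w:
  fixes f :: "real \<Rightarrow> real"
  assumes "m > 0" "\<forall>l<m. c l \<bullet> w = 0"
  shows "measure_pmf.expectation (Zp m c) (\<lambda>z. f (w \<bullet> z)) = f 0"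
proof -
  have "\<forall>l<m. w \<bullet> c l = 0" using assms by (simp add: inner_commute)
  thus ?thesis using assms by (simp add: Z_exp)
qed

lemma Q_lin:
  assumes "0 < q" "q \<le> 1"
  shows "measure_pmf.expectation (Qp q r) (\<lambda>y. A + y * b) = A"
  using assms by (simp add: Q_exp algebra_simps)

lemma Q_quad:
  assumes "0 < q" "q \<le> 1"
  shows "measure_pmf.expectation (Qp q r) (\<lambda>y. (A + y * b) * (B + y * d) + K) = A * B + q^2 * r^2 * b * d + K"
  using assms by (simp add: Q_exp algebra_simps power2_eq_square)

lemma LS_construct:
  assumes s: "s > 0" and q: "0 < q" "q \<le> 1"
  shows "\<exists>F\<in>LS a s. (\<integral>x. (max (x - t) 0)^2 \<partial>F) = fq q (a - t) s"
proof -
  define r where "r = s / q"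
  define Q where "Q = Qp q r"
  define F where "F = distr (measure_pmf Q) borel (\<lambda>y. a + y)"
  have fm: "(\<lambda>y. a + y) \<in> measurable (measure_pmf Q) borel" by simp
  have finQ: "finite (set_pmf Q)" unfolding Q_def by (rule fin_Qp)
  have int: "(\<integral>x. f x \<partial>F) = measure_pmf.expectation Q (\<lambda>y. f (a + y))"
    if "f \<in> borel_measurable borel" for f :: "real \<Rightarrow> real"
    unfolding F_def by (rule integral_distr[OF fm that])
  have intg: "integrable F f" if "f \<in> borel_measurable borel" for f :: "real \<Rightarrow> real"
    unfolding F_def using integrable_distr_eq[OF fm that] integrable_measure_pmf_finite[OF finQ] by simp
  have meas: "measure F A = measure Q {y. a + y \<in> A}" if "A \<in> sets borel" for A
    unfolding F_def using measure_distr[OF fm that] by (simp add: vimage_def)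
  have qr: "q^2 * r^2 = s^2" unfolding r_def using q by (simp add: power_divide)
  have "F \<in> LS a s"
    unfolding LS_def
  proof (intro CollectI conjI)
    show "prob_space F" unfolding F_def by (rule prob_space.prob_space_distr[OF prob_space_measure_pmf fm])
    show "sets F = sets borel" unfolding F_def by simp
    show "integrable F (\<lambda>x. x)" by (rule intg) simp
    show "integrable F (\<lambda>x. x^2)" by (rule intg) simp
    show "(\<integral>x. x \<partial>F) = a" using int[of "\<lambda>x. x"] Q_lin[OF q, where A=a and b=1 and r=r] unfolding Q_def by simp
    have "(\<integral>x. x^2 \<partial>F) = measure_pmf.expectation Q (\<lambda>y. (a + y * 1) * (a + y * 1) + 0)"
      using int[of "\<lambda>x. x^2"] by (simp add: power2_eq_square)
    also have "\<dots> = a^2 + s^2" unfolding Q_def Q_quad[OF q] using qr by (simp add: power2_eq_square)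
    finally show "(\<integral>x. x^2 \<partial>F) = a^2 + s^2" .
    show "\<exists>b. \<forall>x. measure F {y. y - b > x} = measure F {y. y - b < - x}"
    proof (intro exI allI)
      fix x
      have b1: "{y. y - a > x} \<in> sets borel" "{y. y - a < - x} \<in> sets borel"
        by measurable
      have "measure F {y. y - a > x} = measure Q {y. y > x}" using meas[OF b1(1)] by simp
      also have "\<dots> = measure (map_pmf uminus Q) {y. y > x}" unfolding Q_def Q_sym ..
      also have "\<dots> = measure Q {y. - y > x}" by (simp add: vimage_def)
      also have "\<dots> = measure Q {y. y < - x}" by (intro arg_cong[where f="measure (measure_pmf Q)"]) auto
      also have "\<dots> = measure F {y. y - a < - x}" using meas[OF b1(2)] by simp
      finally show "measure F {y. y - a > x} = measure F {y. y - a < - x}" .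
    qed
  qed
  moreover have "(\<integral>x. (max (x - t) 0)^2 \<partial>F) = fq q (a - t) s"
  proof -
    have "(\<integral>x. (max (x - t) 0)^2 \<partial>F) = measure_pmf.expectation Q (\<lambda>y. (max (a + y - t) 0)^2)"
      by (rule int) measurable
    also have "\<dots> = fq q (a - t) s" unfolding Q_def Q_exp[OF q] fq_def pp_def r_def
      by (simp add: algebra_simps)
    finally show ?thesis .
  qed
  ultimately show ?thesis by blast
qed


lemma pd_psd: "pos_def_mat S \<Longrightarrow> psd S"
  unfolding pos_def_mat_def psd_def by (metis inner_zero_left less_eq_real_def matrix_vector_mult_0_right)

lemma scaleR_mv: "((k::real) *\<^sub>R (A::real^'n^'m)) *v x = k *\<^sub>R (A *v x)"
  by (simp add: vec_eq_iff matrix_vector_mult_def sum_distrib_left mult.assoc real_scaleR_def)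

lemma borel_shift: "B \<in> sets borel \<Longrightarrow> {x::real^'n. x - mu \<in> B} \<in> sets borel"
  using measurable_sets[of "\<lambda>x::real^'n. x - mu" borel borel B] by (simp add: vimage_def)

lemma borel_shift': "B \<in> sets borel \<Longrightarrow> {x::real^'n. x - mu \<in> uminus ` B} \<in> sets borel"
  using measurable_sets[of "\<lambda>x::real^'n. - (x - mu)" borel borel B] by (simp add: vimage_def uminus_image_iff)

lemma MS_construct:
  fixes mu w :: "real^'n" and S :: "real^'n^'n"
  assumes pd: "pos_def_mat S" and sw: "w \<bullet> (S *v w) > 0" and q: "0 < q" "q \<le> 1"
  shows "\<exists>G\<in>MS mu S. (\<integral>x. (max (w \<bullet> x - t) 0)^2 \<partial>G) = fq q (w \<bullet> mu - t) (sqrt (w \<bullet> (S *v w)))"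
proof -
  define \<sigma> where "\<sigma> = w \<bullet> (S *v w)"
  have sig: "\<sigma> > 0" using sw \<sigma>_def by simp
  define s where "s = sqrt \<sigma>"
  define r where "r = s / q"
  have qr: "q^2 * r^2 = \<sigma>" unfolding r_def s_def using q sig by (simp add: power_divide)
  define Sw where "Sw = S *v w"
  define bv where "bv = (1 / \<sigma>) *\<^sub>R Sw"
  define C where "C = (\<chi> i j. S $ i $ j - Sw $ i * Sw $ j / \<sigma>)"
  have psdS: "psd S" using pd by (rule pd_psd)
  have Ssym: "transpose S = S" using pd unfolding pos_def_mat_def by simp
  have Sent: "S $ i $ j = S $ j $ i" for i j using Ssym by (metis transpose_def vec_lambda_beta)
  have Cq: "x \<bullet> (C *v x) = x \<bullet> (S *v x) - (Sw \<bullet> x)^2 / \<sigma>" for x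
  proof -
    have "C = S - (1 / \<sigma>) *\<^sub>R outer Sw" unfolding C_def outer_def by (simp add: vec_eq_iff)
    hence "C *v x = S *v x - (1 / \<sigma>) *\<^sub>R (outer Sw *v x)"
      by (simp add: matrix_vector_mult_diff_rdistrib scaleR_mv)
    thus ?thesis by (simp add: inner_diff_right outer_quad)
  qed
  have psdC: "psd C" unfolding psd_def
  proof
    show "transpose C = C" unfolding C_def by (simp add: vec_eq_iff transpose_def Sent mult.commute)
    show "\<forall>x. 0 \<le> x \<bullet> (C *v x)"
    proof
      fix x
      have "(x \<bullet> (S *v w))^2 \<le> (x \<bullet> (S *v x)) * \<sigma>" unfolding \<sigma>_def by (rule psd_cs[OF psdS])
      hence "(Sw \<bullet> x)^2 / \<sigma> \<le> x \<bullet> (S *v x)" unfolding Sw_def using sig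
        by (simp add: divide_le_eq inner_commute)
      thus "0 \<le> x \<bullet> (C *v x)" unfolding Cq by simp
    qed
  qed
  obtain m0 c0 where mc0: "C = outer_sum m0 c0" using psd_decomp[OF psdC] by blast
  define m where "m = Suc m0"
  define c where "c = c0(m0 := 0)"
  have m0: "m > 0" unfolding m_def by simp
  have Cdec: "C = outer_sum m c"
  proof -
    have "outer_sum m0 c = outer_sum m0 c0"
      unfolding outer_sum_def c_def by (intro arg_cong[where f=vec_lambda] ext sum.cong) auto
    thus ?thesis unfolding m_def outer_sum_Suc mc0 by (simp add: c_def outer_def vec_eq_iff)
  qed
  have wc: "\<forall>l<m. c l \<bullet> w = 0"
  proof -
    have "w \<bullet> (C *v w) = \<sigma> - \<sigma>^2 / \<sigma>" unfolding Cq Sw_def \<sigma>_def by (simp add: inner_commute)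
    also have "\<dots> = 0" using sig by (simp add: power2_eq_square)
    finally have "(\<Sum>l<m. (c l \<bullet> w)^2) = 0" unfolding Cdec outer_sum_quad .
    hence "\<forall>l\<in>{..<m}. (c l \<bullet> w)^2 = 0" by (subst sum_nonneg_eq_0_iff[symmetric]) auto
    thus ?thesis by simp
  qed
  define Q where "Q = Qp q r"
  define Z where "Z = Zp m c"
  define P where "P = pair_pmf Q Z"
  define X where "X = (\<lambda>(y::real, z::real^'n). mu + y *\<^sub>R bv + z)"
  define G where "G = distr (measure_pmf P) borel X"
  have finQ: "finite (set_pmf Q)" unfolding Q_def by (rule fin_Qp)
  have finZ: "finite (set_pmf Z)" unfolding Z_def using m0 by (rule fin_Zp)
  have finP: "finite (set_pmf P)" unfolding P_def using finQ finZ by simp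
  have Xm: "X \<in> measurable (measure_pmf P) borel" by simp
  have int: "(\<integral>x. f x \<partial>G) = measure_pmf.expectation Q (\<lambda>y. measure_pmf.expectation Z (\<lambda>z. f (mu + y *\<^sub>R bv + z)))"
    if "f \<in> borel_measurable borel" for f :: "real^'n \<Rightarrow> real"
  proof -
    have "(\<integral>x. f x \<partial>G) = measure_pmf.expectation P (\<lambda>x. f (X x))"
      unfolding G_def by (rule integral_distr[OF Xm that])
    also have "\<dots> = measure_pmf.expectation Q (\<lambda>y. measure_pmf.expectation Z (\<lambda>z. f (mu + y *\<^sub>R bv + z)))"
      unfolding P_def by (subst pair_exp[OF finQ finZ]) (simp add: X_def)
    finally show ?thesis .
  qed
  have intg: "integrable G f" if "f \<in> borel_measurable borel" for f :: "real^'n \<Rightarrow> real"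
    unfolding G_def using integrable_distr_eq[OF Xm that] integrable_measure_pmf_finite[OF finP] by simp
  have meas: "measure G A = measure P (X -` A)" if "A \<in> sets borel" for A
    unfolding G_def using measure_distr[OF Xm that] by simp
  have Psym: "map_pmf (\<lambda>(y, z). (- y, - z)) P = P"
    unfolding P_def map_pair Q_def Z_def Q_sym Z_sym ..
  have "G \<in> MS mu S"
    unfolding MS_def
  proof (intro CollectI conjI allI)
    show "prob_space G" unfolding G_def by (rule prob_space.prob_space_distr[OF prob_space_measure_pmf Xm])
    show "sets G = sets borel" unfolding G_def by simp
    fix i
    show "integrable G (\<lambda>x. x $ i)" by (rule intg) simp
    have "(\<integral>x. x $ i \<partial>G) = measure_pmf.expectation Q (\<lambda>y. measure_pmf.expectation Z (\<lambda>z. (mu $ i + y * bv $ i) + z $ i))"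
      by (subst int) simp_all
    also have "\<dots> = mu $ i" unfolding Z_def Z_lin[OF m0] Q_def Q_lin[OF q] ..
    finally show "(\<integral>x. x $ i \<partial>G) = mu $ i" .
    fix j
    show "integrable G (\<lambda>x. x $ i * x $ j)" by (rule intg) simp
    have "(\<integral>x. x $ i * x $ j \<partial>G) = measure_pmf.expectation Q (\<lambda>y. measure_pmf.expectation Z
         (\<lambda>z. ((mu $ i + y * bv $ i) + z $ i) * ((mu $ j + y * bv $ j) + z $ j)))"
      by (subst int) simp_all
    also have "\<dots> = measure_pmf.expectation Q (\<lambda>y. (mu $ i + y * bv $ i) * (mu $ j + y * bv $ j) + C $ i $ j)"
      unfolding Z_def Z_quad[OF m0] Cdec ..
    also have "\<dots> = mu $ i * mu $ j + q^2 * r^2 * bv $ i * bv $ j + C $ i $ j"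
      unfolding Q_def Q_quad[OF q] ..
    also have "\<dots> = mu $ i * mu $ j + S $ i $ j"
      unfolding qr bv_def C_def using sig by (simp add: field_simps)
    finally show "(\<integral>x. x $ i * x $ j \<partial>G) - mu $ i * mu $ j = S $ i $ j" by simp
  next
    show "\<exists>a. \<forall>B\<in>sets borel. measure G {x. x - a \<in> B} = measure G {x. x - a \<in> uminus ` B}"
    proof (intro exI ballI)
      fix B :: "(real^'n) set" assume B: "B \<in> sets borel"
      have "measure G {x. x - mu \<in> B} = measure P {\<omega>. X \<omega> - mu \<in> B}"
        using meas[OF borel_shift[OF B]] by (simp add: vimage_def)
      also have "\<dots> = measure (map_pmf (\<lambda>(y, z). (- y, - z)) P) {\<omega>. X \<omega> - mu \<in> B}" using Psym by simp
      also have "\<dots> = measure P {\<omega>. X \<omega> - mu \<in> uminus ` B}"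
        by (simp add: vimage_def uminus_image_iff X_def split_beta algebra_simps)
      also have "\<dots> = measure G {x. x - mu \<in> uminus ` B}"
        using meas[OF borel_shift'[OF B]] by (simp add: vimage_def)
      finally show "measure G {x. x - mu \<in> B} = measure G {x. x - mu \<in> uminus ` B}" .
    qed
  qed
  moreover have "(\<integral>x. (max (w \<bullet> x - t) 0)^2 \<partial>G) = fq q (w \<bullet> mu - t) (sqrt (w \<bullet> (S *v w)))"
  proof -
    have wb: "w \<bullet> bv = 1" unfolding bv_def Sw_def \<sigma>_def using sig \<sigma>_def by simp
    have zw: "measure_pmf.expectation Z (\<lambda>z. (max (w \<bullet> mu + y + w \<bullet> z - t) 0)^2) = (max (w \<bullet> mu + y - t) 0)^2" for y
      using Z_w[OF m0 wc, of "\<lambda>u. (max (w \<bullet> mu + y + u - t) 0)^2"] unfolding Z_def by simp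
    have "(\<integral>x. (max (w \<bullet> x - t) 0)^2 \<partial>G) = measure_pmf.expectation Q (\<lambda>y. measure_pmf.expectation Z
         (\<lambda>z. (max (w \<bullet> mu + y + w \<bullet> z - t) 0)^2))"
      by (subst int) (simp_all add: inner_add_right wb)
    also have "\<dots> = measure_pmf.expectation Q (\<lambda>y. (max (w \<bullet> mu + y - t) 0)^2)"
      by (simp add: zw)
    also have "\<dots> = fq q (w \<bullet> mu - t) (sqrt (w \<bullet> (S *v w)))"
      unfolding Q_def Q_exp[OF q] fq_def pp_def r_def s_def \<sigma>_def by (simp add: algebra_simps)
    finally show ?thesis .
  qed
  ultimately show ?thesis by blast
qed


lemma worst_obj_eq:
  fixes mu w :: "real^'n" and S :: "real^'n^'n"
  assumes pd: "pos_def_mat S" and sw: "w \<bullet> (S *v w) > 0"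
  shows "worst_obj mu S t w = Hf (w \<bullet> mu - t) (sqrt (w \<bullet> (S *v w)))"
proof -
  define V where "V = {(\<integral>x. (max (w \<bullet> x - t) 0)^2 \<partial>G) | G. G \<in> MS mu S}"
  define H where "H = Hf (w \<bullet> mu - t) (sqrt (w \<bullet> (S *v w)))"
  have s: "sqrt (w \<bullet> (S *v w)) > 0" using sw by simp
  have mem: "fq q (w \<bullet> mu - t) (sqrt (w \<bullet> (S *v w))) \<in> V" if "0 < q" "q \<le> 1" for q
    using MS_construct[OF pd sw that, of mu t] unfolding V_def by (metis (mono_tags, lifting) mem_Collect_eq)
  have "Sup V = H"
  proof (rule cSup_eq_non_empty)
    show "V \<noteq> {}" using mem[of 1] by auto
    show "\<And>x. x \<in> V \<Longrightarrow> x \<le> H" unfolding V_def H_def using MS_upper[OF _ sw] by auto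
    fix y assume ub: "\<And>x. x \<in> V \<Longrightarrow> x \<le> y"
    show "H \<le> y"
    proof (rule ccontr)
      assume "\<not> H \<le> y"
      hence "H - y > 0" by simp
      then obtain q where q: "0 < q" "q \<le> 1" "fq q (w \<bullet> mu - t) (sqrt (w \<bullet> (S *v w))) > H - (H - y)"
        using fq_approx[OF s] unfolding H_def by blast
      thus False using ub[OF mem[OF q(1,2)]] by simp
    qed
  qed
  thus ?thesis unfolding worst_obj_def V_def H_def .
qed

lemma hS_eq:
  assumes s: "s > 0"
  shows "hS t a s = Hf (a - t) s"
proof -
  define V where "V = {(\<integral>x. (max (x - t) 0)^2 \<partial>F) | F. F \<in> LS a s}"
  have mem: "fq q (a - t) s \<in> V" if "0 < q" "q \<le> 1" for q
    using LS_construct[OF s that, of a t] unfolding V_def by (metis (mono_tags, lifting) mem_Collect_eq)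
  have "Sup V = Hf (a - t) s"
  proof (rule cSup_eq_non_empty)
    show "V \<noteq> {}" using mem[of 1] by auto
    show "\<And>x. x \<in> V \<Longrightarrow> x \<le> Hf (a - t) s" unfolding V_def using LS_upper[OF _ s] by auto
    fix y assume ub: "\<And>x. x \<in> V \<Longrightarrow> x \<le> y"
    show "Hf (a - t) s \<le> y"
    proof (rule ccontr)
      assume "\<not> Hf (a - t) s \<le> y"
      hence "Hf (a - t) s - y > 0" by simp
      then obtain q where q: "0 < q" "q \<le> 1" "fq q (a - t) s > Hf (a - t) s - (Hf (a - t) s - y)"
        using fq_approx[OF s] by blast
      thus False using ub[OF mem[OF q(1,2)]] by simp
    qed
  qed
  thus ?thesis unfolding hS_def V_def .
qed

context pf
begin

definition "Phi t \<xi> = Hf (\<xi> - t) (sqrt (sq \<xi>))"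

lemma sqrt_sq_pos: "sqrt (sq \<xi>) > 0" using sq_pos by simp

lemma phi_eq: "phi mu S t \<xi> = Phi t \<xi>"
  unfolding phi_def Phi_def sq_def[symmetric] using hS_eq[OF sqrt_sq_pos] by simp

lemma obj_w_of: "worst_obj mu S t (w_of mu S \<xi>) = Phi t \<xi>"
  unfolding Phi_def using worst_obj_eq[OF pd, of "w_of mu S \<xi>" mu t] var_w_of sq_pos w_of_mu by simp

lemma obj_ge:
  assumes "w \<bullet> e = 1"
  shows "worst_obj mu S t w \<ge> Phi t (w \<bullet> mu)"
    "worst_obj mu S t w = Phi t (w \<bullet> mu) \<Longrightarrow> w = w_of mu S (w \<bullet> mu)"
proof -
  have "w \<noteq> 0" using assms by auto
  hence sw: "w \<bullet> (S *v w) > 0" by (rule Spos)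
  have eq: "worst_obj mu S t w = Hf (w \<bullet> mu - t) (sqrt (w \<bullet> (S *v w)))" by (rule worst_obj_eq[OF pd sw])
  have ge: "w \<bullet> (S *v w) \<ge> sq (w \<bullet> mu)" using var_min(1)[OF assms refl] .
  have strict: "worst_obj mu S t w > Phi t (w \<bullet> mu)" if "w \<bullet> (S *v w) > sq (w \<bullet> mu)"
    unfolding eq Phi_def using that sqrt_sq_pos by (intro Hf_mono) auto
  show "worst_obj mu S t w \<ge> Phi t (w \<bullet> mu)"
    using strict ge by (cases "w \<bullet> (S *v w) = sq (w \<bullet> mu)") (auto simp: eq Phi_def)
  assume "worst_obj mu S t w = Phi t (w \<bullet> mu)"
  hence "w \<bullet> (S *v w) = sq (w \<bullet> mu)" using strict ge by fastforce
  thus "w = w_of mu S (w \<bullet> mu)" using var_min(2)[OF assms refl] by simp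
qed

lemma sigma_mid:
  assumes "a \<noteq> b"
  shows "sqrt (sq ((a + b)/2)) < (sqrt (sq a) + sqrt (sq b)) / 2"
proof -
  define Bf where "Bf = v0 mu S * a * b - v1 mu S * (a + b) + v2 mu S"
  have id: "sq a * sq b - Bf^2 = (v0 mu S * v2 mu S - (v1 mu S)^2) * (a - b)^2"
    unfolding sq_def Bf_def by algebra
  have "v0 mu S * v2 mu S - (v1 mu S)^2 > 0" using vdet u_pos by simp
  hence "sq a * sq b - Bf^2 > 0" unfolding id using assms by simp
  hence lt: "Bf^2 < (sqrt (sq a) * sqrt (sq b))^2"
    using sq_pos by (simp add: power_mult_distrib less_imp_le)
  have pos: "sqrt (sq a) * sqrt (sq b) > 0" using sqrt_sq_pos by simp
  have Blt: "Bf < sqrt (sq a) * sqrt (sq b)"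
  proof (cases "Bf \<le> 0")
    case True thus ?thesis using pos by simp
  next
    case False thus ?thesis using lt pos by (metis abs_of_pos not_le power2_less_imp_less less_imp_le)
  qed
  have m: "4 * sq ((a + b)/2) = sq a + sq b + 2 * Bf"
    unfolding sq_def Bf_def by (simp add: power2_eq_square field_simps)
  have sqs: "(sqrt (sq a))^2 = sq a" "(sqrt (sq b))^2 = sq b" using sq_pos by (auto simp: less_imp_le)
  have "sq ((a + b)/2) < ((sqrt (sq a) + sqrt (sq b)) / 2)^2"
    using m Blt sqs by (simp add: power2_eq_square field_simps) 
  hence "sqrt (sq ((a + b)/2)) < sqrt (((sqrt (sq a) + sqrt (sq b)) / 2)^2)" by (rule real_sqrt_less_mono)
  also have "\<dots> = (sqrt (sq a) + sqrt (sq b)) / 2" using pos sqrt_sq_pos by (simp add: less_imp_le)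
  finally show ?thesis .
qed

lemma Phi_mid:
  assumes "a \<noteq> b"
  shows "Phi t ((a + b)/2) < (Phi t a + Phi t b)/2"
proof -
  have "Phi t ((a + b)/2) = Hf ((a - t + (b - t))/2) (sqrt (sq ((a + b)/2)))"
    unfolding Phi_def by (simp add: field_simps)
  also have "\<dots> < Hf ((a - t + (b - t))/2) ((sqrt (sq a) + sqrt (sq b)) / 2)"
    using sigma_mid[OF assms] sqrt_sq_pos by (intro Hf_mono) auto
  also have "\<dots> \<le> (Phi t a + Phi t b)/2" unfolding Phi_def
    using sqrt_sq_pos by (intro Hf_mid) auto
  finally show ?thesis .
qed

lemma Phi_low: "\<xi> \<le> t \<Longrightarrow> Phi t \<xi> = sq \<xi> / 2"
  unfolding Phi_def using sq_pos[of \<xi>] by (simp add: Hf_neg less_imp_le)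

lemma sq_min: "\<xi> \<le> B \<Longrightarrow> sq (min (v1 mu S / v0 mu S) B) \<le> sq \<xi>"
proof -
  assume xb: "\<xi> \<le> B"
  define m where "m = v1 mu S / v0 mu S"
  have v0: "v0 mu S > 0" by (rule v0_pos)
  have rep: "sq x = v0 mu S * (x - m)^2 + (v2 mu S - (v1 mu S)^2 / v0 mu S)" for x
    unfolding sq_def m_def using v0 by (simp add: power2_eq_square field_simps)
  have "(min m B - m)^2 \<le> (\<xi> - m)^2"
  proof (cases "m \<le> B")
    case True thus ?thesis by simp
  next
    case False
    hence "m - B \<le> m - \<xi>" "0 \<le> m - B" using xb by auto
    hence "(m - B)^2 \<le> (m - \<xi>)^2" by (rule power_mono)
    thus ?thesis using False by (simp add: power2_commute)
  qed
  thus ?thesis unfolding rep m_def[symmetric] using v0 by simp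
qed

lemma Phi_cont: "continuous_on A (Phi t)"
proof -
  have "continuous_on A (\<lambda>\<xi>. Hf (\<xi> - t) (sqrt (sq \<xi>)))"
    by (intro Hf_cont continuous_intros) (simp_all add: sq_def, intro continuous_intros)
  thus ?thesis unfolding Phi_def[abs_def] .
qed

definition "OPT t nu \<xi>s \<longleftrightarrow> \<xi>s \<le> nu \<and> (\<forall>\<xi>. \<xi> \<le> nu \<longrightarrow> Phi t \<xi>s \<le> Phi t \<xi>)"

lemma feasible_iff: "feasible mu nu w \<longleftrightarrow> w \<bullet> e = 1 \<and> w \<bullet> mu \<le> nu"
  unfolding feasible_def vec1 ..

lemma key:
  assumes "OPT t nu \<xi>s"
  shows "optimal mu S t nu (w_of mu S \<xi>s)" "\<And>w. optimal mu S t nu w \<Longrightarrow> w = w_of mu S \<xi>s"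
proof -
  have o: "\<xi>s \<le> nu" "\<And>\<xi>. \<xi> \<le> nu \<Longrightarrow> Phi t \<xi>s \<le> Phi t \<xi>" using assms unfolding OPT_def by auto
  have fe: "feasible mu nu (w_of mu S \<xi>s)" unfolding feasible_iff using w_of_e w_of_mu o(1) by simp
  show "optimal mu S t nu (w_of mu S \<xi>s)" unfolding optimal_def
  proof (intro conjI allI impI fe)
    fix w' assume "feasible mu nu w'"
    hence w': "w' \<bullet> e = 1" "w' \<bullet> mu \<le> nu" unfolding feasible_iff by auto
    have "worst_obj mu S t (w_of mu S \<xi>s) = Phi t \<xi>s" by (rule obj_w_of)
    also have "\<dots> \<le> Phi t (w' \<bullet> mu)" using o(2) w'(2) .
    also have "\<dots> \<le> worst_obj mu S t w'" using obj_ge(1)[OF w'(1)] .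
    finally show "worst_obj mu S t (w_of mu S \<xi>s) \<le> worst_obj mu S t w'" .
  qed
  fix w assume opt: "optimal mu S t nu w"
  hence w: "w \<bullet> e = 1" "w \<bullet> mu \<le> nu" unfolding optimal_def feasible_iff by auto
  have le: "worst_obj mu S t w \<le> worst_obj mu S t (w_of mu S \<xi>s)"
    using opt fe unfolding optimal_def by blast
  define \<xi> where "\<xi> = w \<bullet> mu"
  have c1: "Phi t \<xi> \<le> worst_obj mu S t w" unfolding \<xi>_def by (rule obj_ge(1)[OF w(1)])
  have c2: "worst_obj mu S t w \<le> Phi t \<xi>s" using le obj_w_of by simp
  have c3: "Phi t \<xi>s \<le> Phi t \<xi>" using o(2) w(2) unfolding \<xi>_def by simp
  have "\<xi> = \<xi>s"
  proof (rule ccontr)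
    assume ne: "\<xi> \<noteq> \<xi>s"
    have "Phi t ((\<xi> + \<xi>s)/2) < (Phi t \<xi> + Phi t \<xi>s)/2" by (rule Phi_mid[OF ne])
    moreover have "(\<xi> + \<xi>s)/2 \<le> nu" using o(1) w(2) unfolding \<xi>_def by simp
    ultimately show False using o(2)[of "(\<xi> + \<xi>s)/2"] c1 c2 c3 by simp
  qed
  moreover have "worst_obj mu S t w = Phi t \<xi>" using c1 c2 c3 by simp
  ultimately show "w = w_of mu S \<xi>s" using obj_ge(2)[OF w(1)] unfolding \<xi>_def by simp
qed

end


theorem proposition5:
  fixes mu :: "real^'n" and S :: "real^'n^'n" and t nu :: real
  assumes "CARD('n) \<ge> 2"
    and "pos_def_mat S"
    and "\<forall>c::real. mu \<noteq> c *\<^sub>R vec 1"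
  shows "(\<exists>!w. optimal mu S t nu w) \<and>
         (t \<ge> nu \<longrightarrow> optimal mu S t nu (w_of mu S (min (v1 mu S / v0 mu S) nu))) \<and>
         (t < nu \<longrightarrow>
            (\<exists>\<xi>\<in>{t..nu}. phi mu S t \<xi> = h2 mu S t nu) \<and>
            (h1 mu S t \<le> h2 mu S t nu \<longrightarrow>
               optimal mu S t nu (w_of mu S (min (v1 mu S / v0 mu S) t))) \<and>
            (h1 mu S t > h2 mu S t nu \<longrightarrow>
               (\<forall>\<xi>2\<in>{t..nu}. phi mu S t \<xi>2 = h2 mu S t nu \<longrightarrow>
                  optimal mu S t nu (w_of mu S \<xi>2))))"
proof -
  interpret P: pf mu S using assms(2,3) by unfold_locales
  define m where "m = v1 mu S / v0 mu S"
  have uniq: "\<exists>!w. optimal mu S t nu w" if "P.OPT t nu \<xi>s" for \<xi>s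
    using P.key[OF that] by blast
  have phiP: "phi mu S t = P.Phi t" by (rule ext) (rule P.phi_eq)
  show ?thesis
  proof (cases "t \<ge> nu")
    case True
    have O: "P.OPT t nu (min m nu)" unfolding P.OPT_def
    proof (intro conjI allI impI)
      show "min m nu \<le> nu" by simp
      fix \<xi> assume x: "\<xi> \<le> nu"
      have a: "min m nu \<le> t" "\<xi> \<le> t" using True x by auto
      show "P.Phi t (min m nu) \<le> P.Phi t \<xi>"
        using P.Phi_low[OF a(1)] P.Phi_low[OF a(2)] P.sq_min[OF x] unfolding m_def
        by simp
    qed
    show ?thesis using uniq[OF O] P.key(1)[OF O] True unfolding m_def by simp
  next
    case False
    hence tn: "t < nu" by simp
    obtain \<xi>2 where x2: "\<xi>2 \<in> {t..nu}" "\<And>y. y \<in> {t..nu} \<Longrightarrow> P.Phi t \<xi>2 \<le> P.Phi t y"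
      using continuous_attains_inf[of "{t..nu}" "P.Phi t"] tn P.Phi_cont by auto
    have h2: "h2 mu S t nu = P.Phi t \<xi>2"
      unfolding h2_def phiP using x2 by (intro cInf_eq_minimum) auto
    define \<xi>1 where "\<xi>1 = min m t"
    have h1: "h1 mu S t = P.Phi t \<xi>1"
      unfolding h1_def Let_def \<xi>1_def m_def using P.Phi_low[of "min (v1 mu S / v0 mu S) t" t]
      by (simp add: P.sq_def)
    have low: "P.Phi t \<xi> \<ge> h1 mu S t" if "\<xi> \<le> t" for \<xi>
      unfolding h1 \<xi>1_def using that P.Phi_low[of \<xi> t] P.Phi_low[of "min m t" t] P.sq_min[of \<xi> t]
      unfolding m_def by simp
    have high: "P.Phi t \<xi> \<ge> h2 mu S t nu" if "\<xi> \<in> {t..nu}" for \<xi>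
      unfolding h2 using x2(2)[OF that] .
    have ex: "\<exists>\<xi>\<in>{t..nu}. phi mu S t \<xi> = h2 mu S t nu" using x2(1) h2 phiP by auto
    have c1: "P.OPT t nu \<xi>1" if "h1 mu S t \<le> h2 mu S t nu"
      unfolding P.OPT_def
    proof (intro conjI allI impI)
      show "\<xi>1 \<le> nu" unfolding \<xi>1_def using tn by simp
      fix \<xi> assume "\<xi> \<le> nu"
      thus "P.Phi t \<xi>1 \<le> P.Phi t \<xi>"
        using low[of \<xi>] high[of \<xi>] that h1 by (cases "\<xi> \<le> t") auto
    qed
    have c2: "P.OPT t nu \<xi>2'" if "h1 mu S t > h2 mu S t nu" "\<xi>2' \<in> {t..nu}" "phi mu S t \<xi>2' = h2 mu S t nu" for \<xi>2'
      unfolding P.OPT_def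
    proof (intro conjI allI impI)
      show "\<xi>2' \<le> nu" using that by simp
      fix \<xi> assume "\<xi> \<le> nu"
      thus "P.Phi t \<xi>2' \<le> P.Phi t \<xi>"
        using low[of \<xi>] high[of \<xi>] that phiP by (cases "\<xi> \<le> t") auto
    qed
    have U: "\<exists>!w. optimal mu S t nu w"
    proof (cases "h1 mu S t \<le> h2 mu S t nu")
      case True thus ?thesis using uniq[OF c1] by blast
    next
      case False
      thus ?thesis using uniq[OF c2[OF _ x2(1)]] h2 phiP by auto
    qed
    show ?thesis
      using U ex tn P.key(1)[OF c1] P.key(1)[OF c2] unfolding \<xi>1_def m_def by auto
  qed
qed


end
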